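(* Let $\Gamma$ be a bicombable, one-ended finitely generated group which is semistable at $\infty$. Then $\mathrm{c\text{-}cat}(\Gamma)\le\mathrm{asdim}(\Gamma)$.
   Context: Notation: $\mathbb{R}_+=[0,\infty)$, $\mathbb{N}=\{0,1,\dots\}$. $\Gamma$ carries a word metric. A (not necessarily continuous) map is controlled if for every $r>0$ there is $S>0$ with $d(x,x')<r\Rightarrow d(f(x),f(x'))<S$; proper if preimages of bounded sets are bounded; coarse if both. A bicombing on a metric space $X$ is a controlled map $C:X\times X\times\mathbb{N}\to X$, $C_p(x,n)=C(p,x,n)$, with $C_p(x,0)=C_p(p,n)=p$ and such that for each $p$ and bounded $K$ there is $N$ with $C_p(x,n)=x$ for $n\ge N$, $x\in K$. $\Gamma$ is semistable at $\infty$ if any two geodesic rays (in its Cayley 2-complex) converging to the same Freudenthal end are properly homotopic (via a continuous proper homotopy); one-ended means exactly one Freudenthal end. For a coarse $q:A\to\mathbb{R}_+$, $I_qA=\{(x,t)\in A\times\mathbb{R}_+: t\le q(x)\}$ (product sup metric), $i_0(x)=(x,0)$, $i_1(x)=(x,q(x))$; coarse maps $f,g:A\to X$ are coarsely homotopic if there exist a coarse $q$ and a coarse $H:I_qA\to X$ with $H\circ i_0=f$, $H\circ i_1=g$. $A\subseteq X$ is coarsely categorical if there are coarse maps $\alpha:\mathbb{R}_+\to X$, $j:A\to\mathbb{R}_+$ with $\alpha\circ j$ coarsely homotopic to the inclusion; $\mathrm{c\text{-}cat}(X)$ is the least $k$ such that $X$ is covered by $k+1$ coarsely categorical sets; $\mathrm{c\text{-}cat}(\Gamma)$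 is $\mathrm{c\text{-}cat}$ of $\Gamma$ with its word metric (equivalently of any proper geodesic space with a proper cocompact isometric $\Gamma$-action). $\mathrm{asdim}(X)\le n$ means: for every $r<\infty$ there exist $r$-disjoint families $\mathcal{U}^0,\dots,\mathcal{U}^n$ of uniformly bounded subsets covering $X$. *)

theory Defs
  imports "HOL-Analysis.Analysis" "HOL-Algebra.Algebra" "HOL-Library.Extended_Nat"
begin

definition controlled :: "'a set \<Rightarrow> ('a \<Rightarrow> 'a \<Rightarrow> real) \<Rightarrow> ('b \<Rightarrow> 'b \<Rightarrow> real) \<Rightarrow> ('a \<Rightarrow> 'b) \<Rightarrow> bool"
  where "controlled A dA dB f \<longleftrightarrow>
    (\<forall>r>0. \<exists>S>0. \<forall>x\<in>A. \<forall>x'\<in>A. dA x x' < r \<longrightarrow> dB (f x) (f x') < S)"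

definition bounded_in :: "('a \<Rightarrow> 'a \<Rightarrow> real) \<Rightarrow> 'a set \<Rightarrow> bool"
  where "bounded_in d K \<longleftrightarrow> (\<exists>c. \<forall>x\<in>K. \<forall>y\<in>K. d x y \<le> c)"

definition metric_proper :: "'a set \<Rightarrow> ('a \<Rightarrow> 'a \<Rightarrow> real) \<Rightarrow> 'b set \<Rightarrow> ('b \<Rightarrow> 'b \<Rightarrow> real) \<Rightarrow> ('a \<Rightarrow> 'b) \<Rightarrow> bool"
  where "metric_proper A dA B dB f \<longleftrightarrow>
    (\<forall>K. K \<subseteq> B \<longrightarrow> bounded_in dB K \<longrightarrow> bounded_in dA {x\<in>A. f x \<in> K})"

definition coarse_map :: "'a set \<Rightarrow> ('a \<Rightarrow> 'a \<Rightarrow> real) \<Rightarrow> 'b set \<Rightarrow> ('b \<Rightarrow> 'b \<Rightarrow> real) \<Rightarrow> ('a \<Rightarrow> 'b) \<Rightarrow> bool"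
  where "coarse_map A dA B dB f \<longleftrightarrow>
    f ` A \<subseteq> B \<and> controlled A dA dB f \<and> metric_proper A dA B dB f"

definition real_dist :: "real \<Rightarrow> real \<Rightarrow> real" where "real_dist x y = \<bar>x - y\<bar>"

definition nat_dist :: "nat \<Rightarrow> nat \<Rightarrow> real" where "nat_dist m n = \<bar>real m - real n\<bar>"

definition prod_dist :: "('a \<Rightarrow> 'a \<Rightarrow> real) \<Rightarrow> ('b \<Rightarrow> 'b \<Rightarrow> real) \<Rightarrow> 'a \<times> 'b \<Rightarrow> 'a \<times> 'b \<Rightarrow> real"
  where "prod_dist dA dB p p' = max (dA (fst p) (fst p')) (dB (snd p) (snd p'))"

definition cyl :: "('a \<Rightarrow> real) \<Rightarrow> 'a set \<Rightarrow> ('a \<times> real) set"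
  where "cyl q A = {(x, t). x \<in> A \<and> 0 \<le> t \<and> t \<le> q x}"

definition coarsely_homotopic ::
  "'a set \<Rightarrow> ('a \<Rightarrow> 'a \<Rightarrow> real) \<Rightarrow> 'b set \<Rightarrow> ('b \<Rightarrow> 'b \<Rightarrow> real) \<Rightarrow> ('a \<Rightarrow> 'b) \<Rightarrow> ('a \<Rightarrow> 'b) \<Rightarrow> bool"
  where "coarsely_homotopic A dA M dX f g \<longleftrightarrow>
    (\<exists>q. coarse_map A dA {0..} real_dist q \<and>
      (\<exists>H. coarse_map (cyl q A) (prod_dist dA real_dist) M dX H \<and>
           (\<forall>x\<in>A. H (x, 0) = f x \<and> H (x, q x) = g x)))"

definition coarsely_categorical :: "'a set \<Rightarrow> ('a \<Rightarrow> 'a \<Rightarrow> real) \<Rightarrow> 'a set \<Rightarrow> bool"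
  where "coarsely_categorical M d A \<longleftrightarrow>
    (\<exists>\<alpha> j. coarse_map {0..} real_dist M d \<alpha> \<and> coarse_map A d {0..} real_dist j \<and>
       coarsely_homotopic A d M d (\<alpha> \<circ> j) id)"

definition ccat_le :: "'a set \<Rightarrow> ('a \<Rightarrow> 'a \<Rightarrow> real) \<Rightarrow> nat \<Rightarrow> bool"
  where "ccat_le M d k \<longleftrightarrow>
    (\<exists>U :: nat \<Rightarrow> 'a set. (\<forall>i\<le>k. U i \<subseteq> M \<and> coarsely_categorical M d (U i)) \<and>
       M \<subseteq> (\<Union>i\<le>k. U i))"

text \<open>Coarse LS category (least such k; \<infinity> if none).\<close>
definition ccat :: "'a set \<Rightarrow> ('a \<Rightarrow> 'a \<Rightarrow> real) \<Rightarrow> enat"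
  where "ccat M d = (INF k\<in>{k. ccat_le M d k}. enat k)"

definition asdim_le :: "'a set \<Rightarrow> ('a \<Rightarrow> 'a \<Rightarrow> real) \<Rightarrow> nat \<Rightarrow> bool"
  where "asdim_le M d n \<longleftrightarrow>
    (\<forall>r::real. \<exists>\<U> :: nat \<Rightarrow> 'a set set.
       (\<forall>i\<le>n. (\<forall>U\<in>\<U> i. U \<subseteq> M) \<and>
              (\<exists>D. \<forall>U\<in>\<U> i. \<forall>x\<in>U. \<forall>y\<in>U. d x y \<le> D) \<and>
              (\<forall>U\<in>\<U> i. \<forall>V\<in>\<U> i. U \<noteq> V \<longrightarrow> (\<forall>x\<in>U. \<forall>y\<in>V. r < d x y))) \<and>
       M \<subseteq> \<Union>(\<Union>i\<le>n. \<U> i))"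

text \<open>Asymptotic dimension (least such n; \<infinity> if none).\<close>
definition asdim :: "'a set \<Rightarrow> ('a \<Rightarrow> 'a \<Rightarrow> real) \<Rightarrow> enat"
  where "asdim M d = (INF n\<in>{n. asdim_le M d n}. enat n)"

definition bicombing :: "'a set \<Rightarrow> ('a \<Rightarrow> 'a \<Rightarrow> real) \<Rightarrow> ('a \<Rightarrow> 'a \<Rightarrow> nat \<Rightarrow> 'a) \<Rightarrow> bool"
  where "bicombing M d C \<longleftrightarrow>
    (\<forall>p\<in>M. \<forall>x\<in>M. \<forall>n. C p x n \<in> M) \<and>
    controlled (M \<times> M \<times> UNIV) (prod_dist d (prod_dist d nat_dist)) d
       (\<lambda>(p, x, n). C p x n) \<and>
    (\<forall>p\<in>M. \<forall>x\<in>M. C p x 0 = p) \<and>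
    (\<forall>p\<in>M. \<forall>n. C p p n = p) \<and>
    (\<forall>p\<in>M. \<forall>K. K \<subseteq> M \<longrightarrow> bounded_in d K \<longrightarrow> (\<exists>N. \<forall>x\<in>K. \<forall>n\<ge>N. C p x n = x))"

text \<open>Words: lists of letters (s, True) = s and (s, False) = s inverse.\<close>
definition word_eval :: "('g, 'b) monoid_scheme \<Rightarrow> ('g \<times> bool) list \<Rightarrow> 'g"
  where "word_eval G w =
    foldr (\<lambda>(s, b) acc. (if b then s else inv\<^bsub>G\<^esub> s) \<otimes>\<^bsub>G\<^esub> acc) w \<one>\<^bsub>G\<^esub>"

definition word_dist :: "('g, 'b) monoid_scheme \<Rightarrow> 'g set \<Rightarrow> 'g \<Rightarrow> 'g \<Rightarrow> real"
  where "word_dist G S g h =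
    real (LEAST n. \<exists>w. length w = n \<and> set (map fst w) \<subseteq> S \<and> g \<otimes>\<^bsub>G\<^esub> word_eval G w = h)"

definition bicombable :: "('g, 'b) monoid_scheme \<Rightarrow> 'g set \<Rightarrow> bool"
  where "bicombable G S \<longleftrightarrow> (\<exists>C. bicombing (carrier G) (word_dist G S) C)"

text \<open>Connectivity in the Cayley graph with the vertex set K removed.\<close>
definition conn_avoid :: "('g, 'b) monoid_scheme \<Rightarrow> 'g set \<Rightarrow> 'g set \<Rightarrow> 'g \<Rightarrow> 'g \<Rightarrow> bool"
  where "conn_avoid G S K x y \<longleftrightarrow>
    (x, y) \<in> {(a, b). a \<in> carrier G - K \<and> b \<in> carrier G - K \<and> word_dist G S a b = 1}\<^sup>*"

text \<open>Exactly one (Freudenthal) end of the Cayley graph.\<close>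
definition one_ended :: "('g, 'b) monoid_scheme \<Rightarrow> 'g set \<Rightarrow> bool"
  where "one_ended G S \<longleftrightarrow>
    (\<forall>K. finite K \<longrightarrow>
      (\<exists>x\<in>carrier G - K. infinite {y. conn_avoid G S K x y} \<and>
         (\<forall>y\<in>carrier G - K. infinite {z. conn_avoid G S K y z} \<longrightarrow> conn_avoid G S K x y)))"

text \<open>Two vertex sequences converge to the same Freudenthal end.\<close>
definition same_end :: "('g, 'b) monoid_scheme \<Rightarrow> 'g set \<Rightarrow> (nat \<Rightarrow> 'g) \<Rightarrow> (nat \<Rightarrow> 'g) \<Rightarrow> bool"
  where "same_end G S v1 v2 \<longleftrightarrow>
    (\<forall>K. finite K \<longrightarrow> (\<exists>N. \<forall>m\<ge>N. \<forall>n\<ge>N.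
        v1 m \<notin> K \<and> v2 n \<notin> K \<and> conn_avoid G S K (v1 m) (v2 n)))"

definition pres_step :: "'g set \<Rightarrow> ('g \<times> bool) list list \<Rightarrow> (('g \<times> bool) list \<times> ('g \<times> bool) list) set"
  where "pres_step S R = {(x @ y @ z, x @ z) | x y z.
      (\<exists>s b. s \<in> S \<and> y = [(s, b), (s, \<not> b)]) \<or> y \<in> set R}"

definition presentation :: "('g, 'b) monoid_scheme \<Rightarrow> 'g set \<Rightarrow> ('g \<times> bool) list list \<Rightarrow> bool"
  where "presentation G S R \<longleftrightarrow>
    (\<forall>w\<in>set R. w \<noteq> [] \<and> set (map fst w) \<subseteq> S \<and> word_eval G w = \<one>\<^bsub>G\<^esub>) \<and>
    (\<forall>w. set (map fst w) \<subseteq> S \<longrightarrow> word_eval G w = \<one>\<^bsub>G\<^esub> \<longrightarrow>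
         (w, []) \<in> (pres_step S R \<union> (pres_step S R)\<inverse>)\<^sup>*)"

type_synonym 'g rawpt = "('g \<times> 'g \<times> nat) \<times> (real \<times> real)"

text \<open>Raw cells: edge (g,s) is ((g,s,0),(t,0)), t in [0,1], from g to g s;
  2-cell of relator i at g is ((g,g,i+1), z), z in the closed unit disk.\<close>
definition cay_raw :: "('g, 'b) monoid_scheme \<Rightarrow> 'g set \<Rightarrow> ('g \<times> bool) list list \<Rightarrow> 'g rawpt set"
  where "cay_raw G S R =
    {((g, s, 0), (t, 0)) | g s t. g \<in> carrier G \<and> s \<in> S \<and> 0 \<le> t \<and> t \<le> 1} \<union>
    {((g, g, Suc i), z) | g i z. g \<in> carrier G \<and> i < length R \<and> norm z \<le> 1}"

definition circ :: "real \<Rightarrow> real \<times> real" where "circ u = (cos (2 * pi * u), sin (2 * pi * u))"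

definition letter_pt :: "('g, 'b) monoid_scheme \<Rightarrow> 'g \<Rightarrow> 'g \<times> bool \<Rightarrow> real \<Rightarrow> 'g rawpt"
  where "letter_pt G h l \<tau> = (if snd l then ((h, fst l, 0), (\<tau>, 0))
      else ((h \<otimes>\<^bsub>G\<^esub> inv\<^bsub>G\<^esub> (fst l), fst l, 0), (1 - \<tau>, 0)))"

definition cay_glue :: "('g, 'b) monoid_scheme \<Rightarrow> 'g set \<Rightarrow> ('g \<times> bool) list list \<Rightarrow> ('g rawpt \<times> 'g rawpt) set"
  where "cay_glue G S R = {(x, y).
     (\<exists>g s s'. g \<in> carrier G \<and> s \<in> S \<and> s' \<in> S \<and>
        x = ((g, s, 0), (0, 0)) \<and> y = ((g, s', 0), (0, 0))) \<or>
     (\<exists>g s s'. g \<in> carrier G \<and> s \<in> S \<and> s' \<in> S \<and>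
        x = ((g, s, 0), (1, 0)) \<and> y = ((g \<otimes>\<^bsub>G\<^esub> s, s', 0), (0, 0))) \<or>
     (\<exists>g i k \<tau>. g \<in> carrier G \<and> i < length R \<and> k < length (R ! i) \<and> 0 \<le> \<tau> \<and> \<tau> \<le> 1 \<and>
        x = ((g, g, Suc i), circ ((real k + \<tau>) / real (length (R ! i)))) \<and>
        y = letter_pt G (g \<otimes>\<^bsub>G\<^esub> word_eval G (take k (R ! i))) ((R ! i) ! k) \<tau>)}"

definition cay_proj :: "('g, 'b) monoid_scheme \<Rightarrow> 'g set \<Rightarrow> ('g \<times> bool) list list \<Rightarrow> 'g rawpt \<Rightarrow> 'g rawpt set"
  where "cay_proj G S R x = ((cay_glue G S R \<union> (cay_glue G S R)\<inverse>)\<^sup>*) `` {x}"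

definition cay_raw_top :: "('g, 'b) monoid_scheme \<Rightarrow> 'g set \<Rightarrow> ('g \<times> bool) list list \<Rightarrow> 'g rawpt topology"
  where "cay_raw_top G S R =
    subtopology (prod_topology (discrete_topology UNIV) euclidean) (cay_raw G S R)"

text \<open>The Cayley 2-complex, with the quotient topology.\<close>
definition cayley_complex :: "('g, 'b) monoid_scheme \<Rightarrow> 'g set \<Rightarrow> ('g \<times> bool) list list \<Rightarrow> 'g rawpt set topology"
  where "cayley_complex G S R = topology_generated_by
    {U. U \<subseteq> cay_proj G S R ` cay_raw G S R \<and>
        openin (cay_raw_top G S R) {x \<in> cay_raw G S R. cay_proj G S R x \<in> U}}"

text \<open>Geodesic edge ray (unit speed) through the vertex sequence v.\<close>
definition geodesic_ray :: "('g, 'b) monoid_scheme \<Rightarrow> 'g set \<Rightarrow> ('g \<times> bool) list list \<Rightarrow>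
    (nat \<Rightarrow> 'g) \<Rightarrow> (real \<Rightarrow> 'g rawpt set) \<Rightarrow> bool"
  where "geodesic_ray G S R v r \<longleftrightarrow>
    (\<forall>n. v n \<in> carrier G) \<and>
    (\<forall>m n. word_dist G S (v m) (v n) = \<bar>real m - real n\<bar>) \<and>
    (\<forall>n. \<exists>s\<in>S.
       (v (Suc n) = v n \<otimes>\<^bsub>G\<^esub> s \<and>
          (\<forall>\<tau>\<in>{0..1}. r (real n + \<tau>) = cay_proj G S R ((v n, s, 0), (\<tau>, 0)))) \<or>
       (v n = v (Suc n) \<otimes>\<^bsub>G\<^esub> s \<and>
          (\<forall>\<tau>\<in>{0..1}. r (real n + \<tau>) = cay_proj G S R ((v (Suc n), s, 0), (1 - \<tau>, 0)))))"

definition proper_cmap :: "'a topology \<Rightarrow> 'b topology \<Rightarrow> ('a \<Rightarrow> 'b) \<Rightarrow> bool"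
  where "proper_cmap M Y f \<longleftrightarrow> continuous_map M Y f \<and>
    (\<forall>K. compactin Y K \<longrightarrow> compactin M {x \<in> topspace M. f x \<in> K})"

definition properly_homotopic_rays :: "'b topology \<Rightarrow> (real \<Rightarrow> 'b) \<Rightarrow> (real \<Rightarrow> 'b) \<Rightarrow> bool"
  where "properly_homotopic_rays M r1 r2 \<longleftrightarrow>
    (\<exists>H. proper_cmap (prod_topology (top_of_set {0::real..}) (top_of_set {0::real..1})) M H \<and>
       (\<forall>t\<ge>0. H (t, 0) = r1 t \<and> H (t, 1) = r2 t))"

definition semistable_at_infinity :: "('g, 'b) monoid_scheme \<Rightarrow> 'g set \<Rightarrow> bool"
  where "semistable_at_infinity G S \<longleftrightarrow>
    (\<exists>R. presentation G S R \<and>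
      (\<forall>v1 r1 v2 r2. geodesic_ray G S R v1 r1 \<and> geodesic_ray G S R v2 r2 \<and> same_end G S v1 v2
         \<longrightarrow> properly_homotopic_rays (cayley_complex G S R) r1 r2))"

end

theory Submission
  imports Defs
begin

locale wgroup = group G for G :: "('g, 'b) monoid_scheme" (structure) +
  fixes S :: "'g set"
  assumes finS: "finite S" and subS: "S \<subseteq> carrier G" and genS: "generate G S = carrier G"
begin

definition wok :: "('g \<times> bool) list \<Rightarrow> bool" where "wok w \<longleftrightarrow> set (map fst w) \<subseteq> S"

abbreviation ev where "ev w \<equiv> word_eval G w"

lemma ev_Nil[simp]: "ev [] = \<one>" by (simp add: word_eval_def)

lemma ev_Cons: "ev ((s,b) # w) = (if b then s else inv s) \<otimes> ev w"
  by (simp add: word_eval_def)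

lemma wok_Cons[simp]: "wok (l # w) \<longleftrightarrow> fst l \<in> S \<and> wok w" by (auto simp: wok_def)
lemma wok_append[simp]: "wok (w1 @ w2) \<longleftrightarrow> wok w1 \<and> wok w2" by (auto simp: wok_def)
lemma wok_Nil[simp]: "wok []" by (simp add: wok_def)

lemma ev_closed: "wok w \<Longrightarrow> ev w \<in> carrier G"
proof (induction w)
  case Nil then show ?case by simp
next
  case (Cons l w) then show ?case using subS by (cases l) (auto simp: ev_Cons)
qed

lemma ev_append: "wok w1 \<Longrightarrow> wok w2 \<Longrightarrow> ev (w1 @ w2) = ev w1 \<otimes> ev w2"
proof (induction w1)
  case Nil then show ?case using ev_closed by simp
next
  case (Cons l w)
  obtain s b where l: "l = (s,b)" by (cases l)
  have s: "s \<in> carrier G" using Cons.prems l subS by auto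
  show ?case using Cons ev_closed s by (auto simp: l ev_Cons m_assoc)
qed

definition winv :: "('g \<times> bool) list \<Rightarrow> ('g \<times> bool) list" where
  "winv w = rev (map (\<lambda>(s,b). (s, \<not> b)) w)"

lemma wok_winv[simp]: "wok (winv w) \<longleftrightarrow> wok w"
proof -
  have "set (map fst (winv w)) = set (map fst w)" by (induct w) (auto simp: winv_def)
  then show ?thesis by (simp add: wok_def)
qed

lemma ev_winv: "wok w \<Longrightarrow> ev (winv w) = inv (ev w)"
proof (induction w)
  case Nil then show ?case by (simp add: winv_def)
next
  case (Cons l w)
  obtain s b where l: "l = (s,b)" by (cases l)
  have s: "s \<in> carrier G" using Cons.prems l subS by auto
  have sS: "s \<in> S" using Cons.prems l by auto
  have "winv (l # w) = winv w @ [(s, \<not> b)]" by (simp add: winv_def l)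
  then have "ev (winv (l # w)) = inv (ev w) \<otimes> (if b then inv s else s)"
    using Cons s sS ev_append[of "winv w" "[(s, \<not> b)]"] by (cases b) (simp_all add: ev_Cons)
  also have "\<dots> = inv ((if b then s else inv s) \<otimes> ev w)"
    using s ev_closed[of w] Cons.prems by (cases b) (simp_all add: inv_mult_group)
  finally show ?case by (simp add: l ev_Cons)
qed

lemma ev_surj: "g \<in> carrier G \<Longrightarrow> \<exists>w. wok w \<and> ev w = g"
proof -
  assume "g \<in> carrier G"
  then have "g \<in> generate G S" using genS by simp
  then show ?thesis
  proof (induction rule: generate.induct)
    case one then show ?case by (intro exI[of _ "[]"]) simp
  next
    case (incl h) then show ?case using subS
      by (intro exI[of _ "[(h,True)]"]) (auto simp: ev_Cons)
  next
    case (inv h) then show ?case using subS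
      by (intro exI[of _ "[(h,False)]"]) (auto simp: ev_Cons)
  next
    case (eng h1 h2)
    then obtain w1 w2 where "wok w1" "ev w1 = h1" "wok w2" "ev w2 = h2" by blast
    then show ?case by (intro exI[of _ "w1 @ w2"]) (simp add: ev_append)
  qed
qed

definition wd :: "'g \<Rightarrow> 'g \<Rightarrow> nat" where
  "wd x y = (LEAST n. \<exists>w. length w = n \<and> set (map fst w) \<subseteq> S \<and> x \<otimes> ev w = y)"

lemma d_wd: "word_dist G S x y = real (wd x y)"
  by (simp add: word_dist_def wd_def)

lemma wd_exists:
  assumes "x \<in> carrier G" "y \<in> carrier G"
  shows "\<exists>w. wok w \<and> length w = wd x y \<and> x \<otimes> ev w = y"
proof -
  have "inv x \<otimes> y \<in> carrier G" using assms by simp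
  then obtain w where w: "wok w" "ev w = inv x \<otimes> y" using ev_surj by blast
  have "x \<otimes> ev w = x \<otimes> (inv x \<otimes> y)" using w(2) by (rule arg_cong)
  also have "\<dots> = (x \<otimes> inv x) \<otimes> y" by (rule m_assoc[symmetric]) (use assms in auto)
  also have "\<dots> = y" using assms by simp
  finally have e: "x \<otimes> ev w = y" .
  have ex: "\<exists>n. \<exists>w. length w = n \<and> set (map fst w) \<subseteq> S \<and> x \<otimes> ev w = y"
    using w(1) e unfolding wok_def by (intro exI[of _ "length w"] exI[of _ w]) simp
  have "\<exists>w. length w = wd x y \<and> set (map fst w) \<subseteq> S \<and> x \<otimes> ev w = y"
    unfolding wd_def by (rule LeastI_ex[OF ex])
  then obtain w' where "length w' = wd x y \<and> set (map fst w') \<subseteq> S \<and> x \<otimes> ev w' = y" ..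
  then show ?thesis unfolding wok_def by (intro exI[of _ w']) simp
qed

lemma wd_le: "wok w \<Longrightarrow> x \<otimes> ev w = y \<Longrightarrow> wd x y \<le> length w"
  unfolding wd_def by (rule Least_le) (auto simp: wok_def)

lemma wd_refl[simp]: "x \<in> carrier G \<Longrightarrow> wd x x = 0"
  using wd_le[of "[]" x x] by simp

lemma wd_sym: assumes "x \<in> carrier G" "y \<in> carrier G" shows "wd x y = wd y x"
proof -
  have *: "wd b a \<le> wd a b" if ab: "a \<in> carrier G" "b \<in> carrier G" for a b
  proof -
    obtain w where w: "wok w" "length w = wd a b" "a \<otimes> ev w = b" using wd_exists[OF ab] by blast
    have ew: "ev w \<in> carrier G" using ev_closed[OF w(1)] .
    have "b \<otimes> ev (winv w) = (a \<otimes> ev w) \<otimes> inv (ev w)" using w(3) ev_winv[OF w(1)] by simp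
    also have "\<dots> = a" using ab ew by (simp add: m_assoc)
    finally have "b \<otimes> ev (winv w) = a" .
    moreover have "length (winv w) = length w" by (simp add: winv_def)
    moreover have "wok (winv w)" using w(1) by simp
    ultimately show ?thesis using wd_le[of "winv w" b a] w(2) by simp
  qed
  show ?thesis using *[OF assms] *[OF assms(2,1)] by simp
qed

lemma wd_triangle:
  assumes xyz: "x \<in> carrier G" "y \<in> carrier G" "z \<in> carrier G"
  shows "wd x z \<le> wd x y + wd y z"
proof -
  obtain w1 where w1: "wok w1" "length w1 = wd x y" "x \<otimes> ev w1 = y" using wd_exists[OF xyz(1,2)] by blast
  obtain w2 where w2: "wok w2" "length w2 = wd y z" "y \<otimes> ev w2 = z" using wd_exists[OF xyz(2,3)] by blast
  have "x \<otimes> ev (w1 @ w2) = x \<otimes> (ev w1 \<otimes> ev w2)" using ev_append[OF w1(1) w2(1)] by simp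
  also have "\<dots> = (x \<otimes> ev w1) \<otimes> ev w2" using ev_closed[OF w1(1)] ev_closed[OF w2(1)] xyz(1) by (simp add: m_assoc)
  also have "\<dots> = z" using w1(3) w2(3) by simp
  finally have "x \<otimes> ev (w1 @ w2) = z" .
  then show ?thesis using wd_le[of "w1 @ w2" x z] w1 w2 by simp
qed

lemma wd_zero: assumes xy: "x \<in> carrier G" "y \<in> carrier G" and "wd x y = 0" shows "x = y"
proof -
  obtain w where w: "wok w" "length w = wd x y" "x \<otimes> ev w = y" using wd_exists[OF xy] by blast
  then show ?thesis using assms by simp
qed

lemma wd_letter:
  assumes "x \<in> carrier G" "s \<in> S"
  shows "wd x (x \<otimes> (if b then s else inv s)) \<le> 1"
proof -
  have "s \<in> carrier G" using assms subS by auto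
  then have "x \<otimes> ev [(s,b)] = x \<otimes> (if b then s else inv s)" by (simp add: ev_Cons)
  moreover have "wok [(s,b)]" using assms by simp
  ultimately show ?thesis using wd_le[of "[(s,b)]" x] by simp
qed

lemma finite_ball: assumes x: "x \<in> carrier G" shows "finite {y \<in> carrier G. wd x y \<le> m}"
proof -
  have "{y \<in> carrier G. wd x y \<le> m} \<subseteq> (\<lambda>w. x \<otimes> ev w) ` {w. set w \<subseteq> S \<times> UNIV \<and> length w \<le> m}"
  proof
    fix y assume y: "y \<in> {y \<in> carrier G. wd x y \<le> m}"
    then have yc: "y \<in> carrier G" and ym: "wd x y \<le> m" by auto
    obtain w where w: "wok w" "length w = wd x y" "x \<otimes> ev w = y" using wd_exists[OF x yc] by blast
    have "set w \<subseteq> S \<times> UNIV" using w(1) unfolding wok_def by auto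
    then have wm: "w \<in> {w. set w \<subseteq> S \<times> UNIV \<and> length w \<le> m}" using w(2) ym by simp
    show "y \<in> (\<lambda>w. x \<otimes> ev w) ` {w. set w \<subseteq> S \<times> UNIV \<and> length w \<le> m}"
      by (rule image_eqI[where x=w, OF _ wm]) (use w(3) in simp)
  qed
  moreover have "finite {w :: ('g \<times> bool) list. set w \<subseteq> S \<times> UNIV \<and> length w \<le> m}"
    by (rule finite_lists_length_le) (intro finite_cartesian_product finS, simp)
  ultimately show ?thesis by (meson finite_imageI finite_subset)
qed

end

context wgroup begin

abbreviation nm :: "'g \<Rightarrow> nat" where "nm x \<equiv> wd \<one> x"

definition ball :: "nat \<Rightarrow> 'g set" where "ball m = {z \<in> carrier G. nm z \<le> m}"

lemma finite_ballm: "finite (ball m)"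
  unfolding ball_def by (rule finite_ball) simp

lemma nm_le: "x \<in> carrier G \<Longrightarrow> y \<in> carrier G \<Longrightarrow> nm y \<le> nm x + wd x y"
  using wd_triangle[of \<one> x y] by simp

lemma nm_ge: "x \<in> carrier G \<Longrightarrow> y \<in> carrier G \<Longrightarrow> nm x \<le> nm y + wd x y"
  using wd_triangle[of \<one> y x] wd_sym[of x y] by simp

definition walk :: "'g set \<Rightarrow> (nat \<Rightarrow> 'g) \<Rightarrow> nat \<Rightarrow> 'g \<Rightarrow> 'g \<Rightarrow> bool" where
  "walk K p L x y \<longleftrightarrow> p 0 = x \<and> p L = y \<and> (\<forall>i. p i \<in> carrier G \<and> p i \<notin> K) \<and>
     (\<forall>i. wd (p i) (p (Suc i)) \<le> 1) \<and> (\<forall>i\<ge>L. p i = y)"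

lemma wok_take: "wok w \<Longrightarrow> wok (take i w)"
  unfolding wok_def by (metis dual_order.trans set_take_subset take_map)

lemma walk_exists:
  assumes x: "x \<in> carrier G" and y: "y \<in> carrier G"
  shows "\<exists>p. walk {} p (wd x y) x y"
proof -
  obtain w where w: "wok w" "length w = wd x y" "x \<otimes> ev w = y" using wd_exists[OF x y] by blast
  define p where "p i = x \<otimes> ev (take i w)" for i
  have pc: "p i \<in> carrier G" for i unfolding p_def using x ev_closed[OF wok_take[OF w(1)]] by simp
  have p0: "p 0 = x" unfolding p_def using x by simp
  have pL: "p i = y" if "i \<ge> wd x y" for i unfolding p_def using that w by simp
  have step: "wd (p i) (p (Suc i)) \<le> 1" for i
  proof (cases "i < length w")
    case True
    obtain s b where sb: "w ! i = (s,b)" by (cases "w ! i")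
    have sS: "s \<in> S" using w(1) True sb unfolding wok_def
      by (metis fst_conv length_map nth_map nth_mem subsetD)
    have sc: "s \<in> carrier G" using sS subS by auto
    have "take (Suc i) w = take i w @ [(s,b)]" using True sb by (simp add: take_Suc_conv_app_nth)
    then have "ev (take (Suc i) w) = ev (take i w) \<otimes> ev [(s,b)]"
      using ev_append[of "take i w" "[(s,b)]"] wok_take[OF w(1)] sS by simp
    also have "ev [(s,b)] = (if b then s else inv s)" using sc by (simp add: ev_Cons)
    finally have "p (Suc i) = p i \<otimes> (if b then s else inv s)"
      unfolding p_def using x ev_closed[OF wok_take[OF w(1)]] sc by (simp add: m_assoc)
    then show ?thesis using wd_letter[OF pc[of i] sS, of b] by simp
  next
    case False
    then have "p i = y" "p (Suc i) = y" using pL w(2) by auto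
    then show ?thesis using y by simp
  qed
  have "walk {} p (wd x y) x y" unfolding walk_def using pc p0 pL step by auto
  then show ?thesis by blast
qed

definition Erel :: "'g set \<Rightarrow> ('g \<times> 'g) set" where
  "Erel K = {(a, b). a \<in> carrier G - K \<and> b \<in> carrier G - K \<and> word_dist G S a b = 1}"

lemma conn_def': "conn_avoid G S K x y \<longleftrightarrow> (x, y) \<in> (Erel K)\<^sup>*"
  unfolding conn_avoid_def Erel_def by simp

lemma Erel_conv: "(Erel K)\<inverse> = Erel K"
  unfolding Erel_def by (auto simp: d_wd wd_sym)

lemma conn_sym: "conn_avoid G S K x y \<Longrightarrow> conn_avoid G S K y x"
  unfolding conn_def' by (metis Erel_conv rtrancl_converseI)

lemma conn_trans: "conn_avoid G S K x y \<Longrightarrow> conn_avoid G S K y z \<Longrightarrow> conn_avoid G S K x z"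
  unfolding conn_def' by (rule rtrancl_trans)

lemma walk_conn:
  assumes "walk K p L x y" shows "conn_avoid G S K x y"
proof -
  have "(x, p i) \<in> (Erel K)\<^sup>*" for i
  proof (induction i)
    case 0 then show ?case using assms by (simp add: walk_def)
  next
    case (Suc i)
    show ?case
    proof (cases "p i = p (Suc i)")
      case True then show ?thesis using Suc by simp
    next
      case False
      have pc: "p i \<in> carrier G" "p (Suc i) \<in> carrier G" "p i \<notin> K" "p (Suc i) \<notin> K"
        using assms by (auto simp: walk_def)
      have "wd (p i) (p (Suc i)) \<le> 1" using assms by (simp add: walk_def)
      moreover have "wd (p i) (p (Suc i)) \<noteq> 0" using wd_zero pc False by blast
      ultimately have "wd (p i) (p (Suc i)) = 1" by simp
      then have "(p i, p (Suc i)) \<in> Erel K" using pc by (simp add: Erel_def d_wd)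
      with Suc show ?thesis by (rule rtrancl_into_rtrancl)
    qed
  qed
  from this[of L] show ?thesis using assms by (simp add: walk_def conn_def')
qed

lemma conn_walk:
  assumes "conn_avoid G S K x y" "x \<in> carrier G" "x \<notin> K"
  shows "\<exists>p L. walk K p L x y"
proof -
  have "(x, y) \<in> (Erel K)\<^sup>*" using assms(1) by (simp add: conn_def')
  then show ?thesis
  proof (induction rule: rtrancl_induct)
    case base
    have "walk K (\<lambda>_. x) 0 x x" using assms wd_refl by (simp add: walk_def)
    then show ?case by blast
  next
    case (step y z)
    then obtain p L where pL: "walk K p L x y" by blast
    have yz: "y \<in> carrier G" "z \<in> carrier G" "y \<notin> K" "z \<notin> K" "wd y z = 1"
      using step(2) by (auto simp: Erel_def d_wd)
    define p' where "p' i = (if i \<le> L then p i else z)" for i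
    have "walk K p' (Suc L) x z"
      unfolding walk_def
    proof (intro conjI allI impI)
      show "p' 0 = x" using pL by (simp add: p'_def walk_def)
      show "p' (Suc L) = z" by (simp add: p'_def)
      fix i
      show "p' i \<in> carrier G" "p' i \<notin> K" using pL yz by (auto simp: p'_def walk_def)
      show "wd (p' i) (p' (Suc i)) \<le> 1"
      proof (cases "i < L")
        case True then show ?thesis using pL by (simp add: p'_def walk_def)
      next
        case False
        show ?thesis
        proof (cases "i = L")
          case True then show ?thesis using pL yz by (simp add: p'_def walk_def)
        next
          case False
          then show ?thesis using \<open>\<not> i < L\<close> yz by (simp add: p'_def)
        qed
      qed
    next
      fix i assume "Suc L \<le> i" then show "p' i = z" by (simp add: p'_def)
    qed
    then show ?case by blast
  qed
qed

lemma walk_extend: "walk K p L x y \<Longrightarrow> walk K p (Suc L) x y"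
  unfolding walk_def by auto

lemma walk_lip:
  assumes "walk K p L x y" shows "wd (p i) (p j) \<le> (if i \<le> j then j - i else i - j)"
proof -
  have pc: "\<And>i. p i \<in> carrier G" using assms by (simp add: walk_def)
  have *: "wd (p i) (p (i + k)) \<le> k" for i k
  proof (induction k)
    case 0 then show ?case using pc by simp
  next
    case (Suc k)
    have "wd (p i) (p (i + Suc k)) \<le> wd (p i) (p (i + k)) + wd (p (i+k)) (p (Suc (i + k)))"
      using wd_triangle pc by simp
    also have "\<dots> \<le> k + 1" using Suc.IH assms unfolding walk_def by (metis add_mono)
    finally show ?case by simp
  qed
  show ?thesis
  proof (cases "i \<le> j")
    case True then show ?thesis using *[of i "j - i"] by simp
  next
    case False then show ?thesis using *[of j "i - j"] wd_sym pc by simp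
  qed
qed

end

locale wge = wgroup G S for G :: "('g, 'b) monoid_scheme" (structure) and S + assumes oe: "one_ended G S"
begin

abbreviation comp where "comp K x \<equiv> {y. conn_avoid G S K x y}"

lemma conn_range: "conn_avoid G S K x y \<Longrightarrow> y = x \<or> (y \<in> carrier G \<and> y \<notin> K)"
  unfolding conn_def' by (induction rule: rtrancl_induct) (auto simp: Erel_def)

lemma M_infinite: "infinite (carrier G)"
proof
  assume fin: "finite (carrier G)"
  obtain x where x: "x \<in> carrier G - {}" "infinite (comp {} x)" using oe unfolding one_ended_def by blast
  have "comp {} x \<subseteq> carrier G" using conn_range x(1) by blast
  then show False using fin x(2) finite_subset by blast
qed

lemma M_unbounded: "\<exists>y\<in>carrier G. R \<le> nm y"
proof (rule ccontr)
  assume "\<not> ?thesis"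
  then have "carrier G \<subseteq> ball R" by (auto simp: ball_def)
  then show False using M_infinite finite_ballm finite_subset by blast
qed

lemma one_in_ball: "\<one> \<in> ball m" by (simp add: ball_def)

lemma far_conn: "\<exists>R. \<forall>x\<in>carrier G. \<forall>y\<in>carrier G. R \<le> nm x \<longrightarrow> R \<le> nm y \<longrightarrow> conn_avoid G S (ball m) x y"
proof -
  let ?K = "ball m"
  obtain x0 where x0: "x0 \<in> carrier G - ?K" "infinite (comp ?K x0)"
    and H: "\<And>y. y \<in> carrier G - ?K \<Longrightarrow> infinite (comp ?K y) \<Longrightarrow> conn_avoid G S ?K x0 y"
    using oe finite_ballm[of m] unfolding one_ended_def by blast
  define Z where "Z = {z \<in> ball (Suc m) - ?K. finite (comp ?K z)}"
  define F where "F = (\<Union>z\<in>Z. comp ?K z)"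
  have "finite Z" unfolding Z_def using finite_ballm[of "Suc m"] by (rule finite_subset[rotated]) auto
  then have finF: "finite F" unfolding F_def Z_def by auto
  obtain R1 where R1: "\<And>z. z \<in> F \<Longrightarrow> nm z < R1"
  proof
    fix z assume "z \<in> F"
    then show "nm z < Suc (Max (nm ` F))" using finF by (simp add: le_imp_less_Suc)
  qed
  have key: "conn_avoid G S ?K x0 y" if y: "y \<in> carrier G" "R1 + m + 1 \<le> nm y" for y
  proof (cases "finite (comp ?K y)")
    case False
    have "y \<notin> ?K" using y by (auto simp: ball_def)
    then show ?thesis using H False y by blast
  next
    case True
    have yK: "y \<notin> ?K" using y by (auto simp: ball_def)
    obtain p where p: "walk {} p (wd y \<one>) y \<one>" using walk_exists[OF y(1)] by auto
    have ex: "\<exists>i. p i \<in> ?K" using p one_in_ball unfolding walk_def by metis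
    define i where "i = (LEAST i. p i \<in> ?K)"
    have piK: "p i \<in> ?K" unfolding i_def using LeastI_ex[OF ex] .
    have notK: "p j \<notin> ?K" if "j < i" for j using not_less_Least[of j "\<lambda>i. p i \<in> ?K"] that i_def by blast
    have i0: "i \<noteq> 0"
    proof
      assume "i = 0" then show False using piK p yK by (simp add: walk_def)
    qed
    define z where "z = p (i - 1)"
    have pc: "\<And>j. p j \<in> carrier G" using p by (simp add: walk_def)
    have zK: "z \<notin> ?K" unfolding z_def using notK i0 by simp
    have "wd (p (i - 1)) (p i) \<le> 1" using p i0 unfolding walk_def by (metis Suc_pred' neq0_conv)
    then have "wd (p i) z \<le> 1" unfolding z_def using wd_sym pc by metis
    then have "nm z \<le> m + 1" using nm_le[OF pc[of i], of z] piK z_def pc by (simp add: ball_def)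
    then have zZ0: "z \<in> ball (Suc m) - ?K" using zK pc z_def by (simp add: ball_def)
    define q where "q j = p (min j (i - 1))" for j
    have "walk ?K q (i - 1) y z"
      unfolding walk_def
    proof (intro conjI allI impI)
      show "q 0 = y" using p by (simp add: q_def walk_def)
      show "q (i - 1) = z" by (simp add: q_def z_def)
      fix j
      show "q j \<in> carrier G" using pc by (simp add: q_def)
      show "q j \<notin> ?K" unfolding q_def using notK i0 by simp
      show "wd (q j) (q (Suc j)) \<le> 1"
      proof (cases "j < i - 1")
        case True then show ?thesis using p by (simp add: q_def walk_def)
      next
        case False then show ?thesis using pc by (simp add: q_def)
      qed
    next
      fix j assume "i - 1 \<le> j" then show "q j = z" by (simp add: q_def z_def)
    qed
    then have cyz: "conn_avoid G S ?K y z" by (rule walk_conn)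
    have "comp ?K z \<subseteq> comp ?K y" using cyz conn_trans by blast
    then have "finite (comp ?K z)" using True finite_subset by blast
    then have "z \<in> Z" using zZ0 by (simp add: Z_def)
    moreover have "y \<in> comp ?K z" using conn_sym[OF cyz] by simp
    ultimately have "y \<in> F" unfolding F_def by blast
    then have False using R1 y by fastforce
    then show ?thesis ..
  qed
  show ?thesis
  proof (intro exI[of _ "R1 + m + 1"] ballI impI)
    fix x y assume "x \<in> carrier G" "y \<in> carrier G" "R1 + m + 1 \<le> nm x" "R1 + m + 1 \<le> nm y"
    then have "conn_avoid G S ?K x0 x" "conn_avoid G S ?K x0 y" using key by auto
    then show "conn_avoid G S ?K x y" using conn_sym conn_trans by metis
  qed
qed

end

context wge begin

definition R0 :: "nat \<Rightarrow> nat" where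
  "R0 m = (SOME R. \<forall>x\<in>carrier G. \<forall>y\<in>carrier G. R \<le> nm x \<longrightarrow> R \<le> nm y \<longrightarrow> conn_avoid G S (ball m) x y)"

lemma R0: "x \<in> carrier G \<Longrightarrow> y \<in> carrier G \<Longrightarrow> R0 m \<le> nm x \<Longrightarrow> R0 m \<le> nm y \<Longrightarrow> conn_avoid G S (ball m) x y"
  using someI_ex[OF far_conn[of m]] unfolding R0_def by blast

definition RR :: "nat \<Rightarrow> nat" where "RR m = m + 1 + (\<Sum>k\<le>m. R0 k)"

lemma RR_ge: "R0 m \<le> RR m" "m < RR m"
proof -
  have "R0 m \<le> (\<Sum>k\<le>m. R0 k)" by (rule member_le_sum) auto
  then show "R0 m \<le> RR m" by (simp add: RR_def)
qed (simp add: RR_def)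

lemma RR_mono: "m \<le> m' \<Longrightarrow> RR m \<le> RR m'"
proof -
  assume "m \<le> m'"
  then have "(\<Sum>k\<le>m. R0 k) \<le> (\<Sum>k\<le>m'. R0 k)" by (intro sum_mono2) auto
  then show ?thesis using \<open>m \<le> m'\<close> by (simp add: RR_def)
qed

definition aa :: "nat \<Rightarrow> 'g" where "aa k = (SOME y. y \<in> carrier G \<and> RR (Suc k) \<le> nm y)"

lemma aa: "aa k \<in> carrier G" "RR (Suc k) \<le> nm (aa k)"
proof -
  have "\<exists>y. y \<in> carrier G \<and> RR (Suc k) \<le> nm y" using M_unbounded by blast
  from someI_ex[OF this] show "aa k \<in> carrier G" "RR (Suc k) \<le> nm (aa k)" unfolding aa_def by auto
qed

lemma aa_walk_ex: "\<exists>pL. walk (ball k) (fst pL) (snd pL) (aa k) (aa (Suc k))"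
proof -
  have "RR (Suc k) \<le> RR (Suc (Suc k))" by (rule RR_mono) simp
  then have "conn_avoid G S (ball k) (aa k) (aa (Suc k))"
    using R0[OF aa(1)[of k] aa(1)[of "Suc k"], of k] aa(2)[of k] aa(2)[of "Suc k"] RR_ge(1)[of k] RR_mono[of k "Suc k"] by simp
  moreover have "aa k \<notin> ball k" using aa(2)[of k] RR_ge(2)[of "Suc k"] by (simp add: ball_def)
  ultimately obtain p L where "walk (ball k) p L (aa k) (aa (Suc k))" using conn_walk aa(1) by blast
  then show ?thesis by (intro exI[of _ "(p, L)"]) simp
qed

definition wk where "wk k = (SOME pL. walk (ball k) (fst pL) (snd pL) (aa k) (aa (Suc k)))"
definition wp where "wp k = fst (wk k)"
definition wL where "wL k = Suc (snd (wk k))"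

lemma wk: "walk (ball k) (wp k) (wL k) (aa k) (aa (Suc k))"
  using someI_ex[OF aa_walk_ex[of k]] unfolding wp_def wL_def wk_def by (rule walk_extend)

lemma wL_pos: "0 < wL k" by (simp add: wL_def)

fun st :: "nat \<Rightarrow> nat \<times> nat" where
  "st 0 = (0, 0)"
| "st (Suc n) = (if Suc (snd (st n)) < wL (fst (st n)) then (fst (st n), Suc (snd (st n))) else (Suc (fst (st n)), 0))"

definition seq :: "nat \<Rightarrow> 'g" where "seq n = wp (fst (st n)) (snd (st n))"

definition TT :: "nat \<Rightarrow> nat" where "TT k = (\<Sum>j<k. wL j)"

lemma st_inv: "snd (st n) < wL (fst (st n)) \<and> n = TT (fst (st n)) + snd (st n)"
proof (induction n)
  case 0 then show ?case using wL_pos by (simp add: TT_def)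
next
  case (Suc n)
  then show ?case using wL_pos by (auto simp: TT_def Let_def)
qed

lemma TT_Suc: "TT (Suc k) = TT k + wL k" by (simp add: TT_def)

lemma TT_mono: "k \<le> k' \<Longrightarrow> TT k \<le> TT k'"
  unfolding TT_def by (intro sum_mono2) auto

lemma TT_ge: "k \<le> TT k"
proof (induction k)
  case (Suc k) then show ?case using wL_pos[of k] by (simp add: TT_Suc)
qed (simp add: TT_def)

lemma rep_unique:
  assumes "TT k + i = TT k' + i'" "i < wL k" "i' < wL k'"
  shows "k = k'"
proof (rule ccontr)
  assume "k \<noteq> k'"
  then consider "k < k'" | "k' < k" by linarith
  then show False
  proof cases
    case 1
    then have "TT (Suc k) \<le> TT k'" by (intro TT_mono) simp
    then show False using assms by (simp add: TT_Suc)
  next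
    case 2
    then have "TT (Suc k') \<le> TT k" by (intro TT_mono) simp
    then show False using assms by (simp add: TT_Suc)
  qed
qed

lemma st_TT: "st (TT k) = (k, 0)"
proof -
  have "TT k = TT (fst (st (TT k))) + snd (st (TT k))" "snd (st (TT k)) < wL (fst (st (TT k)))"
    using st_inv[of "TT k"] by auto
  then have "fst (st (TT k)) = k" using rep_unique[of k 0 "fst (st (TT k))" "snd (st (TT k))"] wL_pos
    by (metis add.right_neutral)
  then show ?thesis using st_inv[of "TT k"] by (metis add_left_cancel prod.collapse add.right_neutral)
qed

lemma seq_TT: "seq (TT k) = aa k"
  using st_TT[of k] wk[of k] by (simp add: seq_def walk_def)

lemma seq_carrier: "seq n \<in> carrier G"
  using wk by (simp add: seq_def walk_def)

lemma seq_step: "wd (seq n) (seq (Suc n)) \<le> 1"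
proof (cases "Suc (snd (st n)) < wL (fst (st n))")
  case True
  then show ?thesis using wk[of "fst (st n)"] by (simp add: seq_def walk_def)
next
  case False
  let ?k = "fst (st n)" and ?i = "snd (st n)"
  have i: "Suc ?i = wL ?k" using False st_inv[of n] by simp
  have "seq (Suc n) = aa (Suc ?k)" using False wk[of "Suc ?k"] by (simp add: seq_def walk_def)
  also have "\<dots> = wp ?k (Suc ?i)" using wk[of ?k] i by (simp add: walk_def)
  finally show ?thesis using wk[of ?k] by (simp add: seq_def walk_def)
qed

lemma seq_avoid: "\<not> nm (seq n) \<le> fst (st n)"
  using wk[of "fst (st n)"] seq_carrier[of n] by (simp add: seq_def walk_def ball_def)

lemma seq_lip: "wd (seq a) (seq (a + k)) \<le> k"
proof (induction k)
  case 0 then show ?case using seq_carrier by simp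
next
  case (Suc k)
  have "wd (seq a) (seq (a + Suc k)) \<le> wd (seq a) (seq (a + k)) + wd (seq (a + k)) (seq (Suc (a + k)))"
    using wd_triangle seq_carrier by simp
  also have "\<dots> \<le> k + 1" using Suc.IH seq_step[of "a + k"] by linarith
  finally show ?case by simp
qed

lemma seq_proper: "finite {n. nm (seq n) \<le> m}"
proof -
  have "{n. nm (seq n) \<le> m} \<subseteq> {..< TT (Suc m)}"
  proof
    fix n assume "n \<in> {n. nm (seq n) \<le> m}"
    then have "fst (st n) < m" using seq_avoid[of n] by simp
    then have "TT (Suc (fst (st n))) \<le> TT (Suc m)" by (intro TT_mono) simp
    then show "n \<in> {..< TT (Suc m)}" using st_inv[of n] by (simp add: TT_Suc)
  qed
  then show ?thesis using finite_subset by blast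
qed

definition mc :: "'g \<Rightarrow> nat" where
  "mc c = (if RR 0 \<le> nm c then (GREATEST m. RR m \<le> nm c) else 0)"

lemma mc_props:
  assumes "RR 0 \<le> nm c"
  shows "RR (mc c) \<le> nm c" "nm c < RR (Suc (mc c))"
proof -
  have bnd: "\<And>y. RR y \<le> nm c \<Longrightarrow> y \<le> nm c" using RR_ge(2) less_imp_le_nat le_trans
    by (meson less_le_trans nat_less_le)
  show "RR (mc c) \<le> nm c" using GreatestI_nat[of "\<lambda>m. RR m \<le> nm c" 0 "nm c", OF assms bnd] assms
    by (simp add: mc_def)
  show "nm c < RR (Suc (mc c))"
  proof (rule ccontr)
    assume "\<not> ?thesis"
    then have "Suc (mc c) \<le> (GREATEST m. RR m \<le> nm c)"
      using Greatest_le_nat[of "\<lambda>m. RR m \<le> nm c" "Suc (mc c)" "nm c", OF _ bnd] by simp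
    then show False using assms by (simp add: mc_def)
  qed
qed

definition KK :: "'g \<Rightarrow> 'g set" where "KK c = (if RR 0 \<le> nm c then ball (mc c) else {})"

lemma pc_ex: assumes "c \<in> carrier G" shows "\<exists>pL. walk (KK c) (fst pL) (snd pL) (aa (mc c)) c"
proof (cases "RR 0 \<le> nm c")
  case True
  have "RR (Suc (mc c)) \<le> nm (aa (mc c))" by (rule aa(2))
  then have "R0 (mc c) \<le> nm (aa (mc c))" using RR_ge(1)[of "mc c"] RR_mono[of "mc c" "Suc (mc c)"] by simp
  moreover have "R0 (mc c) \<le> nm c" using RR_ge(1)[of "mc c"] mc_props(1)[OF True] by simp
  ultimately have "conn_avoid G S (ball (mc c)) (aa (mc c)) c" using R0 aa(1) assms by blast
  moreover have "aa (mc c) \<notin> ball (mc c)" using aa(2)[of "mc c"] RR_ge(2)[of "Suc (mc c)"] by (simp add: ball_def)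
  ultimately obtain p L where "walk (ball (mc c)) p L (aa (mc c)) c" using conn_walk aa(1) by blast
  then show ?thesis using True by (intro exI[of _ "(p, L)"]) (simp add: KK_def)
next
  case False
  obtain p where "walk {} p (wd (aa (mc c)) c) (aa (mc c)) c" using walk_exists[OF aa(1) assms] by blast
  then show ?thesis using False by (intro exI[of _ "(p, wd (aa (mc c)) c)"]) (simp add: KK_def)
qed

definition PP where "PP c = fst (SOME pL. walk (KK c) (fst pL) (snd pL) (aa (mc c)) c)"
definition LL where "LL c = snd (SOME pL. walk (KK c) (fst pL) (snd pL) (aa (mc c)) c)"
definition tau where "tau c = TT (mc c)"

lemma PP: "c \<in> carrier G \<Longrightarrow> walk (KK c) (PP c) (LL c) (seq (tau c)) c"
  using someI_ex[OF pc_ex] unfolding PP_def LL_def tau_def seq_TT by blast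

lemma ray_proper: "finite {c \<in> carrier G. tau c \<le> m \<or> (\<exists>i. nm (PP c i) \<le> m)}"
proof -
  have "{c \<in> carrier G. tau c \<le> m \<or> (\<exists>i. nm (PP c i) \<le> m)} \<subseteq> ball (RR (Suc m))"
  proof
    fix c assume c: "c \<in> {c \<in> carrier G. tau c \<le> m \<or> (\<exists>i. nm (PP c i) \<le> m)}"
    have "nm c < RR (Suc m)"
    proof (cases "RR 0 \<le> nm c")
      case False then show ?thesis using RR_mono[of 0 "Suc m"] by simp
    next
      case True
      have "mc c \<le> m"
      proof (cases "tau c \<le> m")
        case True then show ?thesis using TT_ge[of "mc c"] by (simp add: tau_def)
      next
        case False
        then obtain i where i: "nm (PP c i) \<le> m" using c by auto
        have "PP c i \<notin> KK c" "PP c i \<in> carrier G" using PP[of c] c by (auto simp: walk_def)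
        then show ?thesis using i True by (simp add: KK_def ball_def)
      qed
      then show ?thesis using mc_props(2)[OF True] RR_mono[of "Suc (mc c)" "Suc m"] by simp
    qed
    then show "c \<in> ball (RR (Suc m))" using c by (simp add: ball_def)
  qed
  then show ?thesis using finite_ballm finite_subset by blast
qed

end

lemma finite_bound_real:
  fixes g :: "'x \<Rightarrow> 'x \<Rightarrow> real"
  assumes "finite E" shows "\<exists>B. \<forall>x\<in>E. \<forall>y\<in>E. g x y \<le> B"
proof -
  let ?Z = "case_prod g ` (E \<times> E)"
  have fz: "finite ?Z" using assms by simp
  have "z \<le> (\<Sum>w\<in>?Z. \<bar>w\<bar>)" if "z \<in> ?Z" for z
  proof -
    have "\<bar>z\<bar> \<le> (\<Sum>w\<in>?Z. \<bar>w\<bar>)" using member_le_sum[of z ?Z abs] fz that by simp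
    then show ?thesis by linarith
  qed
  then show ?thesis by (intro exI[of _ "\<Sum>w\<in>?Z. \<bar>w\<bar>"]) force
qed

lemma finite_bounded_in: "finite K \<Longrightarrow> bounded_in d K"
  unfolding bounded_in_def using finite_bound_real[of K d] by blast

lemma bounded_real_upper:
  assumes "bounded_in real_dist K" shows "\<exists>b. \<forall>k\<in>K. k \<le> b"
proof (cases "K = {}")
  case True then show ?thesis by simp
next
  case False
  then obtain k0 where k0: "k0 \<in> K" by blast
  obtain c where c: "\<forall>x\<in>K. \<forall>y\<in>K. real_dist x y \<le> c" using assms unfolding bounded_in_def by blast
  show ?thesis using c k0 by (intro exI[of _ "k0 + c"]) (force simp: real_dist_def)
qed

lemma floor_nat_le:
  fixes t s r :: real
  assumes "0 \<le> t" "0 \<le> s" "\<bar>t - s\<bar> < r"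
  shows "nat \<lfloor>t\<rfloor> \<le> nat \<lfloor>s\<rfloor> + nat \<lceil>r\<rceil>"
proof -
  have "real_of_int \<lfloor>t\<rfloor> \<le> t" by simp
  moreover have "s < real_of_int \<lfloor>s\<rfloor> + 1" by linarith
  moreover have "r \<le> real_of_int \<lceil>r\<rceil>" by simp
  ultimately have "\<lfloor>t\<rfloor> < \<lfloor>s\<rfloor> + 1 + \<lceil>r\<rceil>" using assms by linarith
  then show ?thesis using assms by linarith
qed

locale wgb = wge G S for G :: "('g, 'b) monoid_scheme" (structure) and S +
  fixes C :: "'g \<Rightarrow> 'g \<Rightarrow> nat \<Rightarrow> 'g"
  assumes bic: "bicombing (carrier G) (word_dist G S) C"
begin

lemma bic_in: "p \<in> carrier G \<Longrightarrow> x \<in> carrier G \<Longrightarrow> C p x n \<in> carrier G"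
  using bic by (simp add: bicombing_def)

lemma bic0: "p \<in> carrier G \<Longrightarrow> x \<in> carrier G \<Longrightarrow> C p x 0 = p"
  using bic by (simp add: bicombing_def)

lemma bic_diag: "p \<in> carrier G \<Longrightarrow> C p p n = p"
  using bic by (simp add: bicombing_def)

lemma bounded_ball:
  assumes "K \<subseteq> carrier G" "bounded_in (word_dist G S) K" shows "\<exists>m. K \<subseteq> ball m"
proof (cases "K = {}")
  case True then show ?thesis by simp
next
  case False
  then obtain k0 where k0: "k0 \<in> K" by blast
  obtain c where c: "\<forall>x\<in>K. \<forall>y\<in>K. word_dist G S x y \<le> c" using assms unfolding bounded_in_def by blast
  have "K \<subseteq> ball (nm k0 + nat \<lceil>c\<rceil>)"
  proof
    fix z assume z: "z \<in> K"
    have "real (wd k0 z) \<le> c" using c k0 z by (simp add: d_wd)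
    then have "wd k0 z \<le> nat \<lceil>c\<rceil>" by linarith
    moreover have "k0 \<in> carrier G" "z \<in> carrier G" using assms k0 z by auto
    ultimately show "z \<in> ball (nm k0 + nat \<lceil>c\<rceil>)" using nm_le[of k0 z] by (auto simp: ball_def)
  qed
  then show ?thesis by blast
qed

lemma bounded_finite: "K \<subseteq> carrier G \<Longrightarrow> bounded_in (word_dist G S) K \<Longrightarrow> finite K"
  using bounded_ball finite_ballm finite_subset by metis

lemma bic_stab:
  assumes "p \<in> carrier G" "K \<subseteq> carrier G" "finite K"
  shows "\<exists>N. \<forall>x\<in>K. \<forall>n\<ge>N. C p x n = x"
  using bic assms finite_bounded_in[OF assms(3)] unfolding bicombing_def by blast

lemma bic_ctrl_ex:
  "\<exists>B::nat. \<forall>p p' x x' n n'. p \<in> carrier G \<longrightarrow> p' \<in> carrier G \<longrightarrow> x \<in> carrier G \<longrightarrow> x' \<in> carrier G \<longrightarrow>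
     wd p p' \<le> R \<longrightarrow> wd x x' \<le> R \<longrightarrow> n \<le> n' + R \<longrightarrow> n' \<le> n + R \<longrightarrow> wd (C p x n) (C p' x' n') \<le> B"
proof -
  have "controlled (carrier G \<times> carrier G \<times> UNIV) (prod_dist (word_dist G S) (prod_dist (word_dist G S) nat_dist))
     (word_dist G S) (\<lambda>(p, x, n). C p x n)" using bic by (simp add: bicombing_def)
  then obtain Sr where Sr: "\<forall>u\<in>carrier G \<times> carrier G \<times> UNIV. \<forall>v\<in>carrier G \<times> carrier G \<times> UNIV.
      prod_dist (word_dist G S) (prod_dist (word_dist G S) nat_dist) u v < real R + 1 \<longrightarrow>
      word_dist G S ((\<lambda>(p, x, n). C p x n) u) ((\<lambda>(p, x, n). C p x n) v) < Sr"
    unfolding controlled_def by (metis add_pos_nonneg of_nat_0_le_iff zero_less_one add.commute)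
  show ?thesis
  proof (intro exI[of _ "nat \<lceil>Sr\<rceil>"] allI impI)
    fix p p' x x' n n'
    assume h: "p \<in> carrier G" "p' \<in> carrier G" "x \<in> carrier G" "x' \<in> carrier G"
      "wd p p' \<le> R" "wd x x' \<le> R" "n \<le> n' + R" "n' \<le> n + R"
    have "nat_dist n n' \<le> real R" using h(7,8) unfolding nat_dist_def by linarith
    then have "prod_dist (word_dist G S) (prod_dist (word_dist G S) nat_dist) (p, x, n) (p', x', n') < real R + 1"
      using h(5,6) unfolding prod_dist_def by (simp add: d_wd)
    then have "word_dist G S (C p x n) (C p' x' n') < Sr" using Sr h(1-4) by fastforce
    then show "wd (C p x n) (C p' x' n') \<le> nat \<lceil>Sr\<rceil>" by (simp add: d_wd) linarith
  qed
qed

definition Sbn :: "nat \<Rightarrow> nat" where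
  "Sbn R = (SOME B. \<forall>p p' x x' n n'. p \<in> carrier G \<longrightarrow> p' \<in> carrier G \<longrightarrow> x \<in> carrier G \<longrightarrow> x' \<in> carrier G \<longrightarrow>
     wd p p' \<le> R \<longrightarrow> wd x x' \<le> R \<longrightarrow> n \<le> n' + R \<longrightarrow> n' \<le> n + R \<longrightarrow> wd (C p x n) (C p' x' n') \<le> B)"

lemma Sbn:
  assumes "p \<in> carrier G" "p' \<in> carrier G" "x \<in> carrier G" "x' \<in> carrier G"
    "wd p p' \<le> R" "wd x x' \<le> R" "n \<le> n' + R" "n' \<le> n + R"
  shows "wd (C p x n) (C p' x' n') \<le> Sbn R"
  using someI_ex[OF bic_ctrl_ex[of R]] assms unfolding Sbn_def by blast

lemma bic_near: "c \<in> carrier G \<Longrightarrow> x \<in> carrier G \<Longrightarrow> wd c x \<le> R \<Longrightarrow> wd c (C c x n) \<le> Sbn R"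
  using Sbn[of c c c x R n n] bic_diag[of c n] by simp

end

locale piec = wgb G S C for G :: "('g, 'b) monoid_scheme" (structure) and S C +
  fixes A :: "'g set" and cc :: "'g \<Rightarrow> 'g"
  assumes AM: "A \<subseteq> carrier G" and ccM: "\<And>x. x \<in> A \<Longrightarrow> cc x \<in> carrier G"
   and h1: "\<And>m. finite {x\<in>A. \<exists>n. nm (C (cc x) x n) \<le> m}"
   and h2: "\<And>r. finite {x\<in>A. \<exists>y\<in>A. wd x y < r \<and> cc x \<noteq> cc y}"
begin

lemma xM: "x \<in> A \<Longrightarrow> x \<in> carrier G" using AM by auto

definition Cset :: "nat \<Rightarrow> 'g set" where "Cset m = {c \<in> carrier G. tau c \<le> m \<or> (\<exists>i. nm (PP c i) \<le> m)}"

lemma finite_Cset: "finite (Cset m)" unfolding Cset_def by (rule ray_proper)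

lemma finite_cc: assumes "finite F" shows "finite {x\<in>A. cc x \<in> F}"
proof -
  obtain b where b: "\<And>z. z \<in> F \<Longrightarrow> nm z \<le> b"
    using assms finite_nat_set_iff_bounded_le[of "nm ` F"] by auto
  have "{x\<in>A. cc x \<in> F} \<subseteq> {x\<in>A. \<exists>n. nm (C (cc x) x n) \<le> b}"
  proof
    fix x assume x: "x \<in> {x\<in>A. cc x \<in> F}"
    then have "C (cc x) x 0 = cc x" using bic0 ccM xM by simp
    then show "x \<in> {x\<in>A. \<exists>n. nm (C (cc x) x n) \<le> b}" using x b by (intro CollectI conjI exI[of _ 0]) auto
  qed
  then show ?thesis using h1 finite_subset by blast
qed

definition NN :: "'g \<Rightarrow> nat" where "NN c = (SOME N. \<forall>x\<in>{x\<in>A. cc x = c}. \<forall>n\<ge>N. C c x n = x)"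

lemma NN: assumes "x \<in> A" "NN (cc x) \<le> n" shows "C (cc x) x n = x"
proof -
  have fin: "finite {y\<in>A. cc y = cc x}" using finite_cc[of "{cc x}"] by simp
  have "\<exists>N. \<forall>y\<in>{y\<in>A. cc y = cc x}. \<forall>n\<ge>N. C (cc x) y n = y"
    by (rule bic_stab[OF ccM[OF assms(1)] _ fin]) (use AM in auto)
  from someI_ex[OF this] show ?thesis using assms unfolding NN_def by blast
qed

definition Fi :: "'g \<Rightarrow> nat \<Rightarrow> 'g" where
  "Fi x i = (if i \<le> tau (cc x) + LL (cc x) then PP (cc x) (i - tau (cc x))
             else C (cc x) x (i - tau (cc x) - LL (cc x)))"

definition Qn :: "'g \<Rightarrow> nat" where "Qn x = tau (cc x) + LL (cc x) + NN (cc x)"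

lemma PPw: "x \<in> A \<Longrightarrow> walk (KK (cc x)) (PP (cc x)) (LL (cc x)) (seq (tau (cc x))) (cc x)"
  using PP ccM by blast

lemma Fi_M: "x \<in> A \<Longrightarrow> Fi x i \<in> carrier G"
  using PPw bic_in ccM xM by (auto simp: Fi_def walk_def)

lemma Fi_0: "x \<in> A \<Longrightarrow> Fi x 0 = seq (tau (cc x))"
  using PPw by (simp add: Fi_def walk_def)

lemma Fi_Q: assumes "x \<in> A" shows "Fi x (Qn x) = x"
proof (cases "NN (cc x) = 0")
  case True
  have "C (cc x) x 0 = x" using NN[OF assms] True by simp
  moreover have "C (cc x) x 0 = cc x" using bic0 ccM xM assms by simp
  ultimately show ?thesis using True PPw[OF assms] by (simp add: Fi_def Qn_def walk_def)
next
  case False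
  then show ?thesis using NN[OF assms, of "NN (cc x)"] by (simp add: Fi_def Qn_def)
qed

lemma PP_lip: assumes "x \<in> A" shows "wd (PP (cc x) a) (PP (cc x) b) \<le> (if a \<le> b then b - a else a - b)"
  using walk_lip[OF PPw[OF assms]] .

lemma Fi_close:
  assumes x: "x \<in> A" and y: "y \<in> A" and cxy: "cc x = cc y" and d: "wd x y \<le> R"
    and i: "i \<le> i' + R" "i' \<le> i + R"
  shows "wd (Fi x i) (Fi y i') \<le> R + Sbn R"
proof -
  let ?c = "cc x" let ?i0 = "tau (cc x) + LL (cc x)"
  have cM: "?c \<in> carrier G" using ccM x by simp
  have xm: "x \<in> carrier G" "y \<in> carrier G" using x y xM by auto
  have PL: "PP ?c (LL ?c) = ?c" using PPw[OF x] by (simp add: walk_def)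
  have lipP: "wd (PP ?c (a - tau ?c)) (PP ?c (b - tau ?c)) \<le> R" if "a \<le> b + R" "b \<le> a + R" for a b
    using PP_lip[OF x, of "a - tau ?c" "b - tau ?c"] that by (auto split: if_splits)
  have PPM: "PP ?c k \<in> carrier G" for k using PPw[OF x] by (simp add: walk_def)
  have mixed: "wd (Fi x a) (Fi y b) \<le> R + Sbn R" if ab: "a \<le> ?i0" "\<not> b \<le> ?i0" "b \<le> a + R" for a b
  proof -
    have Fa: "Fi x a = PP ?c (a - tau ?c)" using ab by (simp add: Fi_def)
    have Fb: "Fi y b = C ?c y (b - ?i0)" using ab cxy by (simp add: Fi_def)
    have "wd (PP ?c (a - tau ?c)) (PP ?c (?i0 - tau ?c)) \<le> R" by (rule lipP) (use ab in auto)
    then have 1: "wd (Fi x a) ?c \<le> R" using Fa PL by simp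
    have "wd (C ?c y 0) (C ?c y (b - ?i0)) \<le> Sbn R"
      by (rule Sbn) (use cM xm ab in auto)
    then have 2: "wd ?c (Fi y b) \<le> Sbn R" using bic0[OF cM xm(2)] Fb by simp
    have "wd (Fi x a) (Fi y b) \<le> wd (Fi x a) ?c + wd ?c (Fi y b)"
      using wd_triangle Fi_M x y cM by blast
    then show ?thesis using 1 2 by simp
  qed
  consider "i \<le> ?i0" "i' \<le> ?i0" | "i \<le> ?i0" "\<not> i' \<le> ?i0" | "\<not> i \<le> ?i0" "i' \<le> ?i0" | "\<not> i \<le> ?i0" "\<not> i' \<le> ?i0"
    by blast
  then show ?thesis
  proof cases
    case 1
    then have "Fi x i = PP ?c (i - tau ?c)" "Fi y i' = PP ?c (i' - tau ?c)" using cxy by (auto simp: Fi_def)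
    then show ?thesis using lipP[OF i] by simp
  next
    case 2 then show ?thesis using mixed i by blast
  next
    case 3
    have "wd (Fi y i') (Fi x i) \<le> R + Sbn R"
    proof -
      have y': "y \<in> A" "cc y = cc x" using y cxy by auto
      have Fa: "Fi y i' = PP ?c (i' - tau ?c)" using 3 cxy by (simp add: Fi_def)
      have Fb: "Fi x i = C ?c x (i - ?i0)" using 3 by (simp add: Fi_def)
      have "wd (PP ?c (i' - tau ?c)) (PP ?c (?i0 - tau ?c)) \<le> R" by (rule lipP) (use 3 i in auto)
      then have a1: "wd (Fi y i') ?c \<le> R" using Fa PL by simp
      have "wd (C ?c x 0) (C ?c x (i - ?i0)) \<le> Sbn R"
        by (rule Sbn) (use cM xm 3 i in auto)
      then have a2: "wd ?c (Fi x i) \<le> Sbn R" using bic0[OF cM xm(1)] Fb by simp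
      have "wd (Fi y i') (Fi x i) \<le> wd (Fi y i') ?c + wd ?c (Fi x i)"
        using wd_triangle Fi_M x y cM by blast
      then show ?thesis using a1 a2 by simp
    qed
    then show ?thesis using wd_sym Fi_M x y by metis
  next
    case 4
    then have "Fi x i = C ?c x (i - ?i0)" "Fi y i' = C ?c y (i' - ?i0)" using cxy by (auto simp: Fi_def)
    moreover have "wd (C ?c x (i - ?i0)) (C ?c y (i' - ?i0)) \<le> Sbn R"
      by (rule Sbn) (use cM xm d 4 i in auto)
    ultimately show ?thesis by simp
  qed
qed

lemma Fi_far: assumes "x \<in> A" "nm (Fi x i) \<le> m"
  shows "x \<in> {x\<in>A. cc x \<in> Cset m} \<union> {x\<in>A. \<exists>n. nm (C (cc x) x n) \<le> m}"
proof (cases "i \<le> tau (cc x) + LL (cc x)")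
  case True
  then have "nm (PP (cc x) (i - tau (cc x))) \<le> m" using assms by (simp add: Fi_def)
  then have "cc x \<in> Cset m" using ccM assms(1) unfolding Cset_def by blast
  then show ?thesis using assms by simp
next
  case False
  then show ?thesis using assms by (auto simp: Fi_def)
qed

end

context wge begin
lemma seq_dist: "a \<le> b + k \<Longrightarrow> b \<le> a + k \<Longrightarrow> wd (seq a) (seq b) \<le> k"
proof (cases "a \<le> b")
  case True
  assume "b \<le> a + k"
  then show ?thesis using seq_lip[of a "b - a"] True by simp
next
  case False
  assume "a \<le> b + k"
  then have "wd (seq b) (seq a) \<le> k" using seq_lip[of b "a - b"] False by simp
  then show ?thesis using wd_sym seq_carrier by metis
qed
end

context piec begin

definition alpha :: "real \<Rightarrow> 'g" where "alpha t = seq (nat \<lfloor>t\<rfloor>)"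
definition jj :: "'g \<Rightarrow> real" where "jj x = real (tau (cc x))"
definition qq :: "'g \<Rightarrow> real" where "qq x = real (Qn x)"
definition HH :: "'g \<times> real \<Rightarrow> 'g" where "HH u = Fi (fst u) (nat \<lfloor>snd u\<rfloor>)"

lemma alpha_coarse: "coarse_map {0..} real_dist (carrier G) (word_dist G S) alpha"
  unfolding coarse_map_def
proof (intro conjI)
  show "alpha ` {0..} \<subseteq> carrier G" using seq_carrier by (auto simp: alpha_def)
  show "controlled {0..} real_dist (word_dist G S) alpha"
    unfolding controlled_def
  proof (intro allI impI)
    fix r :: real assume r: "0 < r"
    show "\<exists>Sx>0. \<forall>x\<in>{0..}. \<forall>x'\<in>{0..}. real_dist x x' < r \<longrightarrow> word_dist G S (alpha x) (alpha x') < Sx"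
    proof (intro exI[of _ "r + 2"] conjI ballI impI)
      show "0 < r + 2" using r by simp
      fix t t' :: real assume t: "t \<in> {0..}" "t' \<in> {0..}" and d: "real_dist t t' < r"
      have "nat \<lfloor>t\<rfloor> \<le> nat \<lfloor>t'\<rfloor> + nat \<lceil>r\<rceil>" "nat \<lfloor>t'\<rfloor> \<le> nat \<lfloor>t\<rfloor> + nat \<lceil>r\<rceil>"
        using floor_nat_le[of t t' r] floor_nat_le[of t' t r] t d by (auto simp: real_dist_def abs_minus_commute)
      then have "wd (alpha t) (alpha t') \<le> nat \<lceil>r\<rceil>" unfolding alpha_def by (rule seq_dist)
      moreover have "real (nat \<lceil>r\<rceil>) < r + 1" using r by linarith
      ultimately show "word_dist G S (alpha t) (alpha t') < r + 2" by (simp add: d_wd)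
    qed
  qed
  show "metric_proper {0..} real_dist (carrier G) (word_dist G S) alpha"
    unfolding metric_proper_def
  proof (intro allI impI)
    fix K assume K: "K \<subseteq> carrier G" "bounded_in (word_dist G S) K"
    obtain m where m: "K \<subseteq> ball m" using bounded_ball[OF K] by blast
    obtain B where B: "\<And>n. nm (seq n) \<le> m \<Longrightarrow> n < B"
      using seq_proper[of m] finite_nat_set_iff_bounded[of "{n. nm (seq n) \<le> m}"] by auto
    have "t \<le> real B" if "t \<in> {x \<in> {0..}. alpha x \<in> K}" for t
    proof -
      have "nm (seq (nat \<lfloor>t\<rfloor>)) \<le> m" using that m by (auto simp: alpha_def ball_def)
      then have "nat \<lfloor>t\<rfloor> < B" by (rule B)
      then show ?thesis using that by linarith
    qed
    then show "bounded_in real_dist {x \<in> {0..}. alpha x \<in> K}"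
      unfolding bounded_in_def real_dist_def
    proof (intro exI[of _ "real B"] ballI)
      fix a b assume "\<And>t. t \<in> {x \<in> {0..}. alpha x \<in> K} \<Longrightarrow> t \<le> real B"
        "a \<in> {x \<in> {0..}. alpha x \<in> K}" "b \<in> {x \<in> {0..}. alpha x \<in> K}"
      then have "0 \<le> a" "a \<le> real B" "0 \<le> b" "b \<le> real B" by auto
      then show "\<bar>a - b\<bar> \<le> real B" by linarith
    qed
  qed
qed

lemma ctrl_piece:
  assumes f: "\<And>x y. x \<in> A \<Longrightarrow> y \<in> A \<Longrightarrow> cc x = cc y \<Longrightarrow> f x = f y"
  shows "controlled A (word_dist G S) real_dist f"
  unfolding controlled_def
proof (intro allI impI)
  fix r :: real assume r: "0 < r"
  define R where "R = nat \<lceil>r\<rceil>"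
  define E where "E = {x\<in>A. \<exists>y\<in>A. wd x y < R + 1 \<and> cc x \<noteq> cc y}"
  have "finite E" unfolding E_def by (rule h2)
  then obtain B where B: "\<forall>x\<in>E. \<forall>y\<in>E. real_dist (f x) (f y) \<le> B"
    using finite_bound_real[of E "\<lambda>x y. real_dist (f x) (f y)"] by blast
  show "\<exists>Sx>0. \<forall>x\<in>A. \<forall>x'\<in>A. word_dist G S x x' < r \<longrightarrow> real_dist (f x) (f x') < Sx"
  proof (intro exI[of _ "max B 0 + 1"] conjI ballI impI)
    show "0 < max B 0 + 1" by simp
    fix x y assume xy: "x \<in> A" "y \<in> A" "word_dist G S x y < r"
    have "wd x y \<le> R" using xy(3) unfolding R_def d_wd by linarith
    show "real_dist (f x) (f y) < max B 0 + 1"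
    proof (cases "cc x = cc y")
      case True
      have "f x = f y" using f[OF xy(1,2) True] .
      then show ?thesis by (simp add: real_dist_def)
    next
      case False
      have "wd y x = wd x y" using wd_sym xy xM by metis
      then have "y \<in> A \<and> wd x y < R + 1 \<and> cc x \<noteq> cc y" "x \<in> A \<and> wd y x < R + 1 \<and> cc y \<noteq> cc x"
        using False xy \<open>wd x y \<le> R\<close> by auto
      then have "x \<in> E" "y \<in> E" using xy(1,2) unfolding E_def by blast+
      then have "real_dist (f x) (f y) \<le> B" using B by blast
      then show ?thesis by linarith
    qed
  qed
qed

lemma jj_coarse: "coarse_map A (word_dist G S) {0..} real_dist jj"
  unfolding coarse_map_def
proof (intro conjI)
  show "jj ` A \<subseteq> {0..}" by (auto simp: jj_def)
  show "controlled A (word_dist G S) real_dist jj" by (rule ctrl_piece) (simp add: jj_def)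
  show "metric_proper A (word_dist G S) {0..} real_dist jj"
    unfolding metric_proper_def
  proof (intro allI impI)
    fix K assume K: "K \<subseteq> {0..}" "bounded_in real_dist K"
    obtain b where b: "\<forall>k\<in>K. k \<le> b" using bounded_real_upper[OF K(2)] by blast
    have "{x \<in> A. jj x \<in> K} \<subseteq> {x\<in>A. cc x \<in> Cset (nat \<lceil>b\<rceil>)}"
    proof
      fix x assume x: "x \<in> {x \<in> A. jj x \<in> K}"
      then have "real (tau (cc x)) \<le> b" using b by (auto simp: jj_def)
      then have "tau (cc x) \<le> nat \<lceil>b\<rceil>" by linarith
      then show "x \<in> {x\<in>A. cc x \<in> Cset (nat \<lceil>b\<rceil>)}" using x ccM by (auto simp: Cset_def)
    qed
    then have "finite {x \<in> A. jj x \<in> K}" by (rule finite_subset[OF _ finite_cc[OF finite_Cset]])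
    then show "bounded_in (word_dist G S) {x \<in> A. jj x \<in> K}" by (rule finite_bounded_in)
  qed
qed

lemma qq_coarse: "coarse_map A (word_dist G S) {0..} real_dist qq"
  unfolding coarse_map_def
proof (intro conjI)
  show "qq ` A \<subseteq> {0..}" by (auto simp: qq_def)
  show "controlled A (word_dist G S) real_dist qq" by (rule ctrl_piece) (simp add: qq_def Qn_def)
  show "metric_proper A (word_dist G S) {0..} real_dist qq"
    unfolding metric_proper_def
  proof (intro allI impI)
    fix K assume K: "K \<subseteq> {0..}" "bounded_in real_dist K"
    obtain b where b: "\<forall>k\<in>K. k \<le> b" using bounded_real_upper[OF K(2)] by blast
    have "{x \<in> A. qq x \<in> K} \<subseteq> {x\<in>A. cc x \<in> Cset (nat \<lceil>b\<rceil>)}"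
    proof
      fix x assume x: "x \<in> {x \<in> A. qq x \<in> K}"
      then have "real (Qn x) \<le> b" using b by (auto simp: qq_def)
      then have "tau (cc x) \<le> nat \<lceil>b\<rceil>" unfolding Qn_def by linarith
      then show "x \<in> {x\<in>A. cc x \<in> Cset (nat \<lceil>b\<rceil>)}" using x ccM by (auto simp: Cset_def)
    qed
    then have "finite {x \<in> A. qq x \<in> K}" by (rule finite_subset[OF _ finite_cc[OF finite_Cset]])
    then show "bounded_in (word_dist G S) {x \<in> A. qq x \<in> K}" by (rule finite_bounded_in)
  qed
qed

lemma cyl_mem: "u \<in> cyl qq A \<longleftrightarrow> fst u \<in> A \<and> 0 \<le> snd u \<and> snd u \<le> qq (fst u)"
  by (cases u) (simp add: cyl_def)

lemma idx_le: "u \<in> cyl qq A \<Longrightarrow> nat \<lfloor>snd u\<rfloor> \<le> Qn (fst u)"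
  unfolding cyl_mem qq_def by linarith

lemma HH_coarse: "coarse_map (cyl qq A) (prod_dist (word_dist G S) real_dist) (carrier G) (word_dist G S) HH"
  unfolding coarse_map_def
proof (intro conjI)
  show "HH ` cyl qq A \<subseteq> carrier G" using Fi_M by (auto simp: HH_def cyl_mem)
  show "controlled (cyl qq A) (prod_dist (word_dist G S) real_dist) (word_dist G S) HH"
    unfolding controlled_def
  proof (intro allI impI)
    fix r :: real assume r: "0 < r"
    define R where "R = nat \<lceil>r\<rceil>"
    define E where "E = {x\<in>A. \<exists>y\<in>A. wd x y < R + 1 \<and> cc x \<noteq> cc y}"
    have fE: "finite E" unfolding E_def by (rule h2)
    define V where "V = (\<Union>x\<in>E. Fi x ` {..Qn x})"
    have "finite V" unfolding V_def using fE by simp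
    then obtain B where B: "\<forall>a\<in>V. \<forall>b\<in>V. word_dist G S a b \<le> B"
      using finite_bound_real[of V "word_dist G S"] by blast
    show "\<exists>Sx>0. \<forall>u\<in>cyl qq A. \<forall>v\<in>cyl qq A. prod_dist (word_dist G S) real_dist u v < r \<longrightarrow>
            word_dist G S (HH u) (HH v) < Sx"
    proof (intro exI[of _ "max B (real (R + Sbn R)) + 1"] conjI ballI impI)
      show "0 < max B (real (R + Sbn R)) + 1" by linarith
      fix u v assume u: "u \<in> cyl qq A" and v: "v \<in> cyl qq A" and d: "prod_dist (word_dist G S) real_dist u v < r"
      obtain x t where ux: "u = (x, t)" by (cases u)
      obtain y s where vy: "v = (y, s)" by (cases v)
      have x: "x \<in> A" "0 \<le> t" and y: "y \<in> A" "0 \<le> s" using u v ux vy by (auto simp: cyl_mem)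
      have dxy: "word_dist G S x y < r" and dts: "real_dist t s < r"
        using d ux vy by (auto simp: prod_dist_def)
      have wxy: "wd x y \<le> R" using dxy unfolding R_def d_wd by linarith
      have ii: "nat \<lfloor>t\<rfloor> \<le> nat \<lfloor>s\<rfloor> + R" "nat \<lfloor>s\<rfloor> \<le> nat \<lfloor>t\<rfloor> + R"
        using floor_nat_le[of t s r] floor_nat_le[of s t r] x y dts
        by (auto simp: real_dist_def abs_minus_commute R_def)
      show "word_dist G S (HH u) (HH v) < max B (real (R + Sbn R)) + 1"
      proof (cases "cc x = cc y")
        case True
        have "wd (Fi x (nat \<lfloor>t\<rfloor>)) (Fi y (nat \<lfloor>s\<rfloor>)) \<le> R + Sbn R"
          by (rule Fi_close[OF x(1) y(1) True wxy ii])
        then show ?thesis using ux vy by (simp add: HH_def d_wd)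
      next
        case False
        have "wd y x = wd x y" using wd_sym x y xM by metis
        then have "y \<in> A \<and> wd x y < R + 1 \<and> cc x \<noteq> cc y" "x \<in> A \<and> wd y x < R + 1 \<and> cc y \<noteq> cc x"
          using False x y wxy by auto
        then have "x \<in> E" "y \<in> E" using x(1) y(1) unfolding E_def by blast+
        moreover have "nat \<lfloor>t\<rfloor> \<le> Qn x" "nat \<lfloor>s\<rfloor> \<le> Qn y" using idx_le[OF u] idx_le[OF v] ux vy by simp_all
        ultimately have "HH u \<in> V" "HH v \<in> V" unfolding V_def HH_def using ux vy by auto
        then have "word_dist G S (HH u) (HH v) \<le> B" using B by blast
        then show ?thesis by linarith
      qed
    qed
  qed
  show "metric_proper (cyl qq A) (prod_dist (word_dist G S) real_dist) (carrier G) (word_dist G S) HH"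
    unfolding metric_proper_def
  proof (intro allI impI)
    fix K assume K: "K \<subseteq> carrier G" "bounded_in (word_dist G S) K"
    obtain m where m: "K \<subseteq> ball m" using bounded_ball[OF K] by blast
    define Xs where "Xs = {x\<in>A. cc x \<in> Cset m} \<union> {x\<in>A. \<exists>n. nm (C (cc x) x n) \<le> m}"
    have fX: "finite Xs" unfolding Xs_def using finite_cc[OF finite_Cset] h1 by simp
    obtain Bx where Bx: "\<forall>x\<in>Xs. \<forall>y\<in>Xs. word_dist G S x y \<le> Bx"
      using finite_bound_real[OF fX, of "word_dist G S"] by blast
    obtain Bq where Bq: "\<forall>x\<in>Xs. \<forall>y\<in>Xs. qq x \<le> Bq"
      using finite_bound_real[OF fX, of "\<lambda>x y. qq x"] by blast
    have mem: "fst u \<in> Xs \<and> 0 \<le> snd u \<and> snd u \<le> Bq" if "u \<in> {u \<in> cyl qq A. HH u \<in> K}" for u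
    proof -
      have u: "fst u \<in> A" "0 \<le> snd u" "snd u \<le> qq (fst u)" using that by (auto simp: cyl_mem)
      have "nm (Fi (fst u) (nat \<lfloor>snd u\<rfloor>)) \<le> m" using that m by (auto simp: HH_def ball_def)
      then have fu: "fst u \<in> Xs" unfolding Xs_def by (rule Fi_far[OF u(1)])
      then have "qq (fst u) \<le> Bq" using Bq by blast
      then show ?thesis using u fu by linarith
    qed
    show "bounded_in (prod_dist (word_dist G S) real_dist) {u \<in> cyl qq A. HH u \<in> K}"
      unfolding bounded_in_def
    proof (intro exI[of _ "max Bx Bq"] ballI)
      fix u v assume "u \<in> {u \<in> cyl qq A. HH u \<in> K}" "v \<in> {u \<in> cyl qq A. HH u \<in> K}"
      then have "fst u \<in> Xs" "0 \<le> snd u" "snd u \<le> Bq" "fst v \<in> Xs" "0 \<le> snd v" "snd v \<le> Bq" using mem by blast+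
      then show "prod_dist (word_dist G S) real_dist u v \<le> max Bx Bq"
        using Bx unfolding prod_dist_def real_dist_def by (simp add: max.coboundedI1 max.coboundedI2 abs_le_iff) 
    qed
  qed
qed

theorem categorical: "coarsely_categorical (carrier G) (word_dist G S) A"
proof -
  have c: "\<forall>x\<in>A. HH (x, 0) = (alpha \<circ> jj) x \<and> HH (x, qq x) = id x"
  proof
    fix x assume x: "x \<in> A"
    show "HH (x, 0) = (alpha \<circ> jj) x \<and> HH (x, qq x) = id x"
      using Fi_0[OF x] Fi_Q[OF x] by (simp add: HH_def alpha_def jj_def qq_def)
  qed
  have hom: "coarsely_homotopic A (word_dist G S) (carrier G) (word_dist G S) (alpha \<circ> jj) id"
    unfolding coarsely_homotopic_def
    by (rule exI[of _ qq], rule conjI[OF qq_coarse], rule exI[of _ HH], rule conjI[OF HH_coarse], rule c)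
  show ?thesis unfolding coarsely_categorical_def
    by (rule exI[of _ alpha], rule exI[of _ jj], intro conjI alpha_coarse jj_coarse hom)
qed

end

locale cvr = wgb G S C for G :: "('g, 'b) monoid_scheme" (structure) and S C +
  fixes n :: nat
  assumes ad: "asdim_le (carrier G) (word_dist G S) n"
begin

definition good :: "real \<Rightarrow> (nat \<Rightarrow> 'g set set) \<Rightarrow> bool" where
  "good r \<U> \<longleftrightarrow> (\<forall>i\<le>n. (\<forall>U\<in>\<U> i. U \<subseteq> carrier G) \<and>
              (\<exists>D. \<forall>U\<in>\<U> i. \<forall>x\<in>U. \<forall>y\<in>U. word_dist G S x y \<le> D) \<and>
              (\<forall>U\<in>\<U> i. \<forall>V\<in>\<U> i. U \<noteq> V \<longrightarrow> (\<forall>x\<in>U. \<forall>y\<in>V. r < word_dist G S x y))) \<and>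
       carrier G \<subseteq> \<Union>(\<Union>i\<le>n. \<U> i)"

definition cov :: "real \<Rightarrow> nat \<Rightarrow> 'g set set" where "cov r = (SOME \<U>. good r \<U>)"

lemma cov_good: "good r (cov r)"
proof -
  have "\<exists>\<U>. good r \<U>" using ad unfolding asdim_le_def good_def by blast
  then show ?thesis unfolding cov_def by (rule someI_ex)
qed

lemma good_i:
  assumes "good r \<U>" "i \<le> n"
  shows "\<forall>U\<in>\<U> i. U \<subseteq> carrier G" "\<exists>D. \<forall>U\<in>\<U> i. \<forall>x\<in>U. \<forall>y\<in>U. word_dist G S x y \<le> D"
    "\<forall>U\<in>\<U> i. \<forall>V\<in>\<U> i. U \<noteq> V \<longrightarrow> (\<forall>x\<in>U. \<forall>y\<in>V. r < word_dist G S x y)"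
proof -
  have "\<forall>i\<le>n. (\<forall>U\<in>\<U> i. U \<subseteq> carrier G) \<and>
              (\<exists>D. \<forall>U\<in>\<U> i. \<forall>x\<in>U. \<forall>y\<in>U. word_dist G S x y \<le> D) \<and>
              (\<forall>U\<in>\<U> i. \<forall>V\<in>\<U> i. U \<noteq> V \<longrightarrow> (\<forall>x\<in>U. \<forall>y\<in>V. r < word_dist G S x y))"
    using assms(1) unfolding good_def by (rule conjunct1)
  then have "(\<forall>U\<in>\<U> i. U \<subseteq> carrier G) \<and>
              (\<exists>D. \<forall>U\<in>\<U> i. \<forall>x\<in>U. \<forall>y\<in>U. word_dist G S x y \<le> D) \<and>
              (\<forall>U\<in>\<U> i. \<forall>V\<in>\<U> i. U \<noteq> V \<longrightarrow> (\<forall>x\<in>U. \<forall>y\<in>V. r < word_dist G S x y))"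
    using assms(2) by (elim allE impE)
  note cj = this
  show "\<forall>U\<in>\<U> i. U \<subseteq> carrier G" using cj by (rule conjunct1)
  show "\<exists>D. \<forall>U\<in>\<U> i. \<forall>x\<in>U. \<forall>y\<in>U. word_dist G S x y \<le> D" using cj by (rule conjunct2[THEN conjunct1])
  show "\<forall>U\<in>\<U> i. \<forall>V\<in>\<U> i. U \<noteq> V \<longrightarrow> (\<forall>x\<in>U. \<forall>y\<in>V. r < word_dist G S x y)"
    using cj by (rule conjunct2[THEN conjunct2])
qed

lemma cov_sub: "i \<le> n \<Longrightarrow> U \<in> cov r i \<Longrightarrow> U \<subseteq> carrier G"
  using good_i(1)[OF cov_good] by blast

lemma cov_sep: "i \<le> n \<Longrightarrow> U \<in> cov r i \<Longrightarrow> V \<in> cov r i \<Longrightarrow> U \<noteq> V \<Longrightarrow> x \<in> U \<Longrightarrow> y \<in> V \<Longrightarrow> r < real (wd x y)"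
  using good_i(3)[OF cov_good] unfolding d_wd by blast

lemma cov_cover: "x \<in> carrier G \<Longrightarrow> \<exists>i\<le>n. \<exists>U\<in>cov r i. x \<in> U"
proof -
  assume x: "x \<in> carrier G"
  have "carrier G \<subseteq> \<Union>(\<Union>i\<le>n. cov r i)" using cov_good[of r] unfolding good_def by (rule conjunct2)
  then show ?thesis using x by blast
qed

lemma Dn_ex: "\<exists>D::nat. \<forall>i\<le>n. \<forall>U\<in>cov r i. \<forall>x\<in>U. \<forall>y\<in>U. wd x y \<le> D"
proof -
  have "\<forall>i. \<exists>D. i \<le> n \<longrightarrow> (\<forall>U\<in>cov r i. \<forall>x\<in>U. \<forall>y\<in>U. word_dist G S x y \<le> D)"
    using good_i(2)[OF cov_good] by blast
  then obtain Df where Df: "\<And>i. i \<le> n \<Longrightarrow> \<forall>U\<in>cov r i. \<forall>x\<in>U. \<forall>y\<in>U. word_dist G S x y \<le> Df i"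
    by metis
  let ?T = "\<Sum>i\<le>n. \<bar>Df i\<bar>"
  show ?thesis
  proof (intro exI[of _ "nat \<lceil>?T\<rceil>"] allI impI ballI)
    fix i U x y assume i: "i \<le> n" and U: "U \<in> cov r i" and xy: "x \<in> U" "y \<in> U"
    have "\<bar>Df i\<bar> \<le> ?T" using i by (intro member_le_sum[of i "{..n}" "\<lambda>i. \<bar>Df i\<bar>"]) auto
    moreover have "real (wd x y) \<le> Df i" using Df[OF i] U xy by (simp add: d_wd)
    ultimately show "wd x y \<le> nat \<lceil>?T\<rceil>" by linarith
  qed
qed

definition Dn :: "real \<Rightarrow> nat" where "Dn r = (SOME D. \<forall>i\<le>n. \<forall>U\<in>cov r i. \<forall>x\<in>U. \<forall>y\<in>U. wd x y \<le> D)"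

lemma cov_diam: "i \<le> n \<Longrightarrow> U \<in> cov r i \<Longrightarrow> x \<in> U \<Longrightarrow> y \<in> U \<Longrightarrow> wd x y \<le> Dn r"
  using someI_ex[OF Dn_ex[of r]] unfolding Dn_def by blast

fun rr :: "nat \<Rightarrow> nat" where
  "rr 0 = 1"
| "rr (Suc k) = 2 * rr k + Dn (real (rr k)) + 1"

abbreviation covk where "covk k \<equiv> cov (real (rr k))"
abbreviation Dk where "Dk k \<equiv> Dn (real (rr k))"

definition Ek :: "nat \<Rightarrow> nat" where "Ek k = Dk k + rr k + Dk (Suc k)"

definition hh :: "nat \<Rightarrow> nat" where
  "hh j = j + 1 + Ek (Suc j) + Sbn (Ek (Suc j)) + Dk j + 2 * rr j + 1"

definition rho :: "nat \<Rightarrow> nat" where "rho k = (\<Sum>j<k. hh j)"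

lemma rr_ge: "k < rr k"
  by (induction k) auto

lemma rr_Suc_ge: "rr k \<le> rr (Suc k)" by simp

lemma rr_mono: "k \<le> k' \<Longrightarrow> rr k \<le> rr k'"
  by (induction k' rule: dec_induct) (auto intro: le_trans)

lemma rr_sep: "2 * rr k + Dk k < rr (Suc k)" by simp

lemma rho_Suc: "rho (Suc k) = rho k + hh k" by (simp add: rho_def)

lemma rho_0: "rho 0 = 0" by (simp add: rho_def)

lemma rho_mono: "k \<le> k' \<Longrightarrow> rho k \<le> rho k'"
  unfolding rho_def by (intro sum_mono2) auto

lemma rho_ge: "k \<le> rho k"
proof (induction k)
  case (Suc k) then show ?case by (simp add: rho_Suc hh_def)
qed (simp add: rho_0)

definition ann :: "'g \<Rightarrow> nat" where "ann x = (LEAST k. nm x < rho (Suc k))"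

lemma ann_ex: "\<exists>k. nm x < rho (Suc k)"
  using rho_ge[of "Suc (nm x)"] by (intro exI[of _ "nm x"]) simp

lemma ann_upper: "nm x < rho (Suc (ann x))"
  unfolding ann_def by (rule LeastI_ex[OF ann_ex])

lemma ann_lower: "rho (ann x) \<le> nm x"
proof (cases "ann x")
  case 0 then show ?thesis by (simp add: rho_0)
next
  case (Suc j)
  then have "j < ann x" by simp
  then have "\<not> nm x < rho (Suc j)" unfolding ann_def by (rule not_less_Least)
  then show ?thesis using Suc by simp
qed

lemma ann_ge: "rho k \<le> nm x \<Longrightarrow> k \<le> ann x"
proof (rule ccontr)
  assume "rho k \<le> nm x" "\<not> k \<le> ann x"
  then have "rho (Suc (ann x)) \<le> rho k" by (intro rho_mono) simp
  then show False using ann_upper[of x] \<open>rho k \<le> nm x\<close> by simp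
qed

lemma ann_le: "nm x < rho k \<Longrightarrow> ann x < k"
proof (rule ccontr)
  assume "nm x < rho k" "\<not> ann x < k"
  then have "rho k \<le> rho (ann x)" by (intro rho_mono) simp
  then show False using ann_lower[of x] \<open>nm x < rho k\<close> by simp
qed

lemma finite_ann: "finite {x \<in> carrier G. ann x \<le> m}"
proof -
  have "{x \<in> carrier G. ann x \<le> m} \<subseteq> ball (rho (Suc m))"
  proof
    fix x assume x: "x \<in> {x \<in> carrier G. ann x \<le> m}"
    then have "rho (Suc (ann x)) \<le> rho (Suc m)" by (intro rho_mono) simp
    then show "x \<in> ball (rho (Suc m))" using ann_upper[of x] x by (simp add: ball_def)
  qed
  then show ?thesis using finite_ballm finite_subset by blast
qed

end

locale cvi = cvr G S C n for G :: "('g, 'b) monoid_scheme" (structure) and S C n +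
  fixes i :: nat
  assumes i_le: "i \<le> n"
begin

definition Ucol :: "'g set" where "Ucol = {x \<in> carrier G. \<exists>U. U \<in> covk (ann x) i \<and> x \<in> U}"
definition bp :: "'g \<Rightarrow> 'g set" where "bp x = (THE U. U \<in> covk (ann x) i \<and> x \<in> U)"
definition att :: "nat \<Rightarrow> 'g set \<Rightarrow> 'g set \<Rightarrow> bool" where
  "att k U U' \<longleftrightarrow> U' \<in> covk (Suc k) i \<and> (\<exists>y z. y \<in> Ucol \<and> ann y = k \<and> y \<in> U \<and> z \<in> Ucol \<and> ann z = Suc k \<and> z \<in> U' \<and> wd y z < rr k)"
definition pt :: "nat \<Rightarrow> 'g set \<Rightarrow> 'g" where "pt k U = (SOME y. y \<in> Ucol \<and> ann y = k \<and> y \<in> U)"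
definition cenk :: "nat \<Rightarrow> 'g set \<Rightarrow> 'g" where
  "cenk k U = (if \<exists>U'. att k U U' then pt (Suc k) (THE U'. att k U U') else pt k U)"
definition cen :: "'g \<Rightarrow> 'g" where "cen x = cenk (ann x) (bp x)"

lemma Ucol_M: "x \<in> Ucol \<Longrightarrow> x \<in> carrier G" by (simp add: Ucol_def)

lemma diam: "U \<in> covk k i \<Longrightarrow> u \<in> U \<Longrightarrow> v \<in> U \<Longrightarrow> wd u v \<le> Dk k"
  using cov_diam[OF i_le] by blast

lemma sep: "U \<in> covk k i \<Longrightarrow> V \<in> covk k i \<Longrightarrow> U \<noteq> V \<Longrightarrow> u \<in> U \<Longrightarrow> v \<in> V \<Longrightarrow> rr k < wd u v"
  using cov_sep[OF i_le, of U "real (rr k)" V u v] by simp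

lemma covk_M: "U \<in> covk k i \<Longrightarrow> u \<in> U \<Longrightarrow> u \<in> carrier G"
  using cov_sub[OF i_le] by blast

lemma bp_eq: assumes "U \<in> covk (ann x) i" "x \<in> U" shows "bp x = U"
  unfolding bp_def
proof (rule the_equality)
  show "U \<in> covk (ann x) i \<and> x \<in> U" using assms by simp
  fix V assume V: "V \<in> covk (ann x) i \<and> x \<in> V"
  show "V = U"
  proof (rule ccontr)
    assume "V \<noteq> U"
    then have "rr (ann x) < wd x x" using sep[of V "ann x" U x x] V assms by simp
    then show False using covk_M[OF assms] by simp
  qed
qed

lemma bp: assumes "x \<in> Ucol" shows "bp x \<in> covk (ann x) i" "x \<in> bp x"
proof -
  obtain U where U: "U \<in> covk (ann x) i" "x \<in> U" using assms unfolding Ucol_def by blast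
  then show "bp x \<in> covk (ann x) i" "x \<in> bp x" using bp_eq[OF U] by simp_all
qed

lemma pt: assumes "y \<in> Ucol" "ann y = k" "y \<in> U"
  shows "pt k U \<in> Ucol" "ann (pt k U) = k" "pt k U \<in> U"
proof -
  have "\<exists>y. y \<in> Ucol \<and> ann y = k \<and> y \<in> U" using assms by blast
  from someI_ex[OF this] show "pt k U \<in> Ucol" "ann (pt k U) = k" "pt k U \<in> U"
    unfolding pt_def by blast+
qed

lemma tri3: "a \<in> carrier G \<Longrightarrow> b \<in> carrier G \<Longrightarrow> c \<in> carrier G \<Longrightarrow> d \<in> carrier G \<Longrightarrow>
  wd a d \<le> wd a b + wd b c + wd c d"
  using wd_triangle[of a b d] wd_triangle[of b c d] by simp

lemma att_unique:
  assumes U: "U \<in> covk k i" and a1: "att k U U1" and a2: "att k U U2"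
  shows "U1 = U2"
proof (rule ccontr)
  assume ne: "U1 \<noteq> U2"
  obtain y1 z1 where w1: "y1 \<in> Ucol" "y1 \<in> U" "z1 \<in> Ucol" "z1 \<in> U1" "wd y1 z1 < rr k" "U1 \<in> covk (Suc k) i"
    using a1 unfolding att_def by blast
  obtain y2 z2 where w2: "y2 \<in> Ucol" "y2 \<in> U" "z2 \<in> Ucol" "z2 \<in> U2" "wd y2 z2 < rr k" "U2 \<in> covk (Suc k) i"
    using a2 unfolding att_def by blast
  have M: "y1 \<in> carrier G" "z1 \<in> carrier G" "y2 \<in> carrier G" "z2 \<in> carrier G" using w1 w2 Ucol_M by auto
  have "wd z1 z2 \<le> wd z1 y1 + wd y1 y2 + wd y2 z2" using tri3[OF M(2) M(1) M(3) M(4)] .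
  moreover have "wd z1 y1 = wd y1 z1" using wd_sym M by metis
  moreover have "wd y1 y2 \<le> Dk k" using diam[OF U w1(2) w2(2)] .
  ultimately have "wd z1 z2 < rr (Suc k)" using w1(5) w2(5) rr_sep[of k] by linarith
  moreover have "rr (Suc k) < wd z1 z2" using sep[OF w1(6) w2(6) ne w1(4) w2(4)] .
  ultimately show False by simp
qed

lemma cen_cases:
  assumes x: "x \<in> Ucol"
  shows "(\<exists>U'. att (ann x) (bp x) U' \<and> cen x = pt (Suc (ann x)) U') \<or>
         (\<not> (\<exists>U'. att (ann x) (bp x) U') \<and> cen x = pt (ann x) (bp x))"
proof (cases "\<exists>U'. att (ann x) (bp x) U'")
  case True
  then obtain U' where U': "att (ann x) (bp x) U'" by blast
  have th: "(THE U'. att (ann x) (bp x) U') = U'"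
  proof (rule the_equality)
    show "att (ann x) (bp x) U'" by (rule U')
    fix V assume "att (ann x) (bp x) V"
    then show "V = U'" using att_unique[OF bp(1)[OF x]] U' by blast
  qed
  have "cen x = pt (Suc (ann x)) U'" unfolding cen_def cenk_def using True th by (simp only: if_True)
  then show ?thesis using U' by blast
next
  case False
  have "cen x = pt (ann x) (bp x)" unfolding cen_def cenk_def using False by (simp only: if_False)
  then show ?thesis using False by blast
qed

lemma cen_props: assumes x: "x \<in> Ucol"
  shows "cen x \<in> carrier G" "wd x (cen x) \<le> Ek (ann x)"
proof -
  let ?k = "ann x"
  have xM: "x \<in> carrier G" using x Ucol_M by simp
  from cen_cases[OF x] have "cen x \<in> carrier G \<and> wd x (cen x) \<le> Ek ?k"
  proof
    assume "\<exists>U'. att ?k (bp x) U' \<and> cen x = pt (Suc ?k) U'"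
    then obtain U' where U': "att ?k (bp x) U'" "cen x = pt (Suc ?k) U'" by blast
    obtain y z where w: "y \<in> Ucol" "y \<in> bp x" "z \<in> Ucol" "ann z = Suc ?k" "z \<in> U'" "wd y z < rr ?k" "U' \<in> covk (Suc ?k) i"
      using U'(1) unfolding att_def by blast
    have p: "pt (Suc ?k) U' \<in> Ucol" "pt (Suc ?k) U' \<in> U'" using pt[OF w(3,4,5)] by simp_all
    have M: "y \<in> carrier G" "z \<in> carrier G" "pt (Suc ?k) U' \<in> carrier G" using w p Ucol_M by auto
    have "wd x (pt (Suc ?k) U') \<le> wd x y + wd y z + wd z (pt (Suc ?k) U')" using tri3[OF xM M(1) M(2) M(3)] .
    moreover have "wd x y \<le> Dk ?k" using diam[OF bp(1)[OF x] bp(2)[OF x] w(2)] .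
    moreover have "wd z (pt (Suc ?k) U') \<le> Dk (Suc ?k)" using diam[OF w(7) w(5) p(2)] .
    ultimately show ?thesis using U'(2) M w(6) by (simp add: Ek_def)
  next
    assume "\<not> (\<exists>U'. att ?k (bp x) U') \<and> cen x = pt ?k (bp x)"
    then have c: "cen x = pt ?k (bp x)" by simp
    have p: "pt ?k (bp x) \<in> Ucol" "pt ?k (bp x) \<in> bp x" using pt[OF x refl bp(2)[OF x]] by simp_all
    have "wd x (pt ?k (bp x)) \<le> Dk ?k" using diam[OF bp(1)[OF x] bp(2)[OF x] p(2)] .
    then show ?thesis using c p Ucol_M by (simp add: Ek_def)
  qed
  then show "cen x \<in> carrier G" "wd x (cen x) \<le> Ek (ann x)" by simp_all
qed

lemma no_double:
  assumes a: "att k U U'" and z: "z \<in> Ucol" "ann z = Suc k" "z \<in> U'"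
  shows "\<not> (\<exists>U''. att (Suc k) (bp z) U'')"
proof
  assume "\<exists>U''. att (Suc k) (bp z) U''"
  then obtain U'' where a2: "att (Suc k) (bp z) U''" by blast
  obtain y z' where w: "y \<in> Ucol" "ann y = k" "z' \<in> Ucol" "ann z' = Suc k" "z' \<in> U'" "wd y z' < rr k" "U' \<in> covk (Suc k) i"
    using a unfolding att_def by blast
  obtain y' w' where w2: "y' \<in> Ucol" "ann y' = Suc k" "y' \<in> bp z" "w' \<in> Ucol" "ann w' = Suc (Suc k)" "wd y' w' < rr (Suc k)"
    using a2 unfolding att_def by blast
  have bz: "bp z = U'" using bp_eq[of U' z] w(7) z by simp
  have M: "y \<in> carrier G" "z' \<in> carrier G" "y' \<in> carrier G" "w' \<in> carrier G" using w w2 Ucol_M by auto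
  have "nm y < rho (Suc k)" using ann_upper[of y] w(2) by simp
  moreover have "nm z' \<le> nm y + wd y z'" using nm_le[OF M(1) M(2)] .
  moreover have "nm y' \<le> nm z' + wd z' y'" using nm_le[OF M(2) M(3)] .
  moreover have "wd z' y' \<le> Dk (Suc k)" using diam[OF w(7) w(5)] w2(3) bz by simp
  moreover have "nm w' \<le> nm y' + wd y' w'" using nm_le[OF M(3) M(4)] .
  moreover have "rho (Suc (Suc k)) \<le> nm w'" using ann_lower[of w'] w2(5) by simp
  moreover have "rho (Suc (Suc k)) = rho (Suc k) + hh (Suc k)" by (rule rho_Suc)
  moreover have "Dk (Suc k) + 2 * rr (Suc k) + rr k \<le> hh (Suc k) + rr (Suc k)"
    using rr_Suc_ge[of k] by (simp add: hh_def)
  ultimately show False using w(6) w2(6) by linarith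
qed

lemma cen_h1: assumes x: "x \<in> Ucol" shows "ann x \<le> nm (C (cen x) x m)"
proof (cases "ann x")
  case 0 then show ?thesis by simp
next
  case (Suc j)
  let ?k = "ann x" let ?c = "cen x"
  have xM: "x \<in> carrier G" using x Ucol_M by simp
  have cM: "?c \<in> carrier G" and dc: "wd x ?c \<le> Ek ?k" using cen_props[OF x] by simp_all
  have dc': "wd ?c x \<le> Ek ?k" using dc wd_sym xM cM by metis
  have CM: "C ?c x m \<in> carrier G" using bic_in cM xM by simp
  have b: "wd ?c (C ?c x m) \<le> Sbn (Ek ?k)" using bic_near[OF cM xM dc'] .
  have "rho ?k \<le> nm x" by (rule ann_lower)
  moreover have "rho ?k = rho j + hh j" using Suc rho_Suc by simp
  moreover have "hh j \<ge> ?k + Ek ?k + Sbn (Ek ?k)" using Suc by (simp add: hh_def)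
  moreover have "nm x \<le> nm ?c + wd ?c x" using nm_le[OF cM xM] .
  moreover have "nm ?c \<le> nm (C ?c x m) + wd ?c (C ?c x m)"
    using nm_ge[OF cM CM] .
  ultimately show ?thesis using dc' b by linarith
qed

lemma cen_h2:
  assumes x: "x \<in> Ucol" and y: "y \<in> Ucol" and r: "r < ann x" and d: "wd x y < r"
  shows "cen x = cen y"
proof -
  let ?k = "ann x"
  obtain j where kj: "?k = Suc j" using r by (cases "ann x") auto
  have xM: "x \<in> carrier G" and yM: "y \<in> carrier G" using x y Ucol_M by auto
  have rj: "r \<le> rr j" using rr_ge[of j] r kj by simp
  have rk: "rr j \<le> rr ?k" using rr_mono[of j ?k] kj by simp
  have dyx: "wd y x = wd x y" using wd_sym xM yM by metis
  have lo: "j \<le> ann y"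
  proof (rule ann_ge)
    have "rho ?k = rho j + hh j" using kj rho_Suc by simp
    moreover have "rr j \<le> hh j" by (simp add: hh_def)
    moreover have "rho ?k \<le> nm x" by (rule ann_lower)
    moreover have "nm x \<le> nm y + wd y x" using nm_le[OF yM xM] .
    ultimately show "rho j \<le> nm y" using rj d dyx by linarith
  qed
  have hi: "ann y < Suc (Suc ?k)"
  proof (rule ann_le)
    have "rho (Suc (Suc ?k)) = rho (Suc ?k) + hh (Suc ?k)" by (rule rho_Suc)
    moreover have "rr (Suc ?k) \<le> hh (Suc ?k)" by (simp add: hh_def)
    moreover have "rr ?k \<le> rr (Suc ?k)" by (rule rr_Suc_ge)
    moreover have "nm x < rho (Suc ?k)" by (rule ann_upper)
    moreover have "nm y \<le> nm x + wd x y" using nm_le[OF xM yM] .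
    ultimately show "nm y < rho (Suc (Suc ?k))" using rj rk d by linarith
  qed
  have cen_up: "cen u = pt (Suc (ann u)) V" if u: "u \<in> Ucol" and at: "att (ann u) (bp u) V" for u V
  proof -
    from cen_cases[OF u] show ?thesis
    proof
      assume "\<exists>U'. att (ann u) (bp u) U' \<and> cen u = pt (Suc (ann u)) U'"
      then obtain U' where U': "att (ann u) (bp u) U'" "cen u = pt (Suc (ann u)) U'" by blast
      have "U' = V" by (rule att_unique[OF bp(1)[OF u] U'(1) at])
      then show ?thesis using U'(2) by simp
    next
      assume "\<not> (\<exists>U'. att (ann u) (bp u) U') \<and> cen u = pt (ann u) (bp u)"
      then show ?thesis using at by blast
    qed
  qed
  have cen_no: "cen u = pt (ann u) (bp u)" if u: "u \<in> Ucol" and na: "\<not> (\<exists>U'. att (ann u) (bp u) U')" for u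
  proof -
    from cen_cases[OF u] show ?thesis
    proof
      assume "\<exists>U'. att (ann u) (bp u) U' \<and> cen u = pt (Suc (ann u)) U'"
      then show ?thesis using na by blast
    next
      assume "\<not> (\<exists>U'. att (ann u) (bp u) U') \<and> cen u = pt (ann u) (bp u)"
      then show ?thesis by (rule conjunct2)
    qed
  qed
  have att_intro: "att k (bp u) (bp v)"
    if u: "u \<in> Ucol" and v: "v \<in> Ucol" and k: "ann u = k" "ann v = Suc k" and duv: "wd u v < rr k" for u v k
  proof -
    have "bp v \<in> covk (Suc k) i" using bp(1)[OF v] k by simp
    moreover have "u \<in> Ucol \<and> ann u = k \<and> u \<in> bp u \<and> v \<in> Ucol \<and> ann v = Suc k \<and> v \<in> bp v \<and> wd u v < rr k"
      using u v k duv bp(2)[OF u] bp(2)[OF v] by simp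
    ultimately show ?thesis unfolding att_def by blast
  qed
  consider "ann y = ?k" | "ann y = Suc ?k" | "ann y = j" using lo hi kj by linarith
  then show ?thesis
  proof cases
    case 1
    have "bp x = bp y"
    proof (rule ccontr)
      assume ne: "bp x \<noteq> bp y"
      have b1: "bp y \<in> covk ?k i" using bp(1)[OF y] 1 by simp
      have "rr ?k < wd x y" by (rule sep[OF bp(1)[OF x] b1 ne bp(2)[OF x] bp(2)[OF y]])
      then show False using d rj rk by linarith
    qed
    then show ?thesis using 1 by (simp add: cen_def)
  next
    case 2
    have dxy: "wd x y < rr ?k" using d rj rk by linarith
    have at: "att ?k (bp x) (bp y)" by (rule att_intro[OF x y refl 2 dxy])
    have "\<not> (\<exists>U''. att (Suc ?k) (bp y) U'')" by (rule no_double[OF at y 2 bp(2)[OF y]])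
    then have cy: "cen y = pt (Suc ?k) (bp y)" using cen_no[OF y] 2 by simp
    have cx: "cen x = pt (Suc ?k) (bp y)" by (rule cen_up[OF x at])
    show ?thesis using cx cy by simp
  next
    case 3
    have dyx': "wd y x < rr j" using d dyx rj by linarith
    have at: "att j (bp y) (bp x)" by (rule att_intro[OF y x 3 kj dyx'])
    have "\<not> (\<exists>U''. att (Suc j) (bp x) U'')" by (rule no_double[OF at x kj bp(2)[OF x]])
    then have cx: "cen x = pt ?k (bp x)" using cen_no[OF x] kj by simp
    have cy: "cen y = pt (Suc j) (bp x)" using cen_up[OF y] at 3 by simp
    show ?thesis using cx cy kj by simp
  qed
qed

lemma color_categorical: "coarsely_categorical (carrier G) (word_dist G S) Ucol"
proof -
  interpret piec G S C Ucol cen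
  proof
    show "Ucol \<subseteq> carrier G" using Ucol_M by blast
    fix x assume "x \<in> Ucol" then show "cen x \<in> carrier G" using cen_props by simp
  next
    fix m
    have "{x \<in> Ucol. \<exists>k. nm (C (cen x) x k) \<le> m} \<subseteq> {x \<in> carrier G. ann x \<le> m}"
    proof
      fix x assume "x \<in> {x \<in> Ucol. \<exists>k. nm (C (cen x) x k) \<le> m}"
      then obtain k where x: "x \<in> Ucol" "nm (C (cen x) x k) \<le> m" by blast
      have "ann x \<le> m" using cen_h1[OF x(1), of k] x(2) by linarith
      then show "x \<in> {x \<in> carrier G. ann x \<le> m}" using Ucol_M[OF x(1)] by simp
    qed
    then show "finite {x \<in> Ucol. \<exists>k. nm (C (cen x) x k) \<le> m}" using finite_ann finite_subset by blast
  next
    fix r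
    have "{x \<in> Ucol. \<exists>y\<in>Ucol. wd x y < r \<and> cen x \<noteq> cen y} \<subseteq> {x \<in> carrier G. ann x \<le> r}"
    proof
      fix x assume x: "x \<in> {x \<in> Ucol. \<exists>y\<in>Ucol. wd x y < r \<and> cen x \<noteq> cen y}"
      then obtain y where y: "y \<in> Ucol" "wd x y < r" "cen x \<noteq> cen y" by blast
      have "x \<in> Ucol" using x by simp
      then have "\<not> r < ann x" using cen_h2[of x y r] y by blast
      then show "x \<in> {x \<in> carrier G. ann x \<le> r}" using x Ucol_M by auto
    qed
    then show "finite {x \<in> Ucol. \<exists>y\<in>Ucol. wd x y < r \<and> cen x \<noteq> cen y}" using finite_ann finite_subset by blast
  qed
  show ?thesis by (rule categorical)
qed

end

context cvr begin

lemma ccat_n: "ccat_le (carrier G) (word_dist G S) n"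
proof -
  define U where "U i = cvi.Ucol G S C n i" for i
  have ci: "cvi G S C n i" if "i \<le> n" for i
    using cvr_axioms that by (simp add: cvi_def cvi_axioms_def)
  have 1: "U i \<subseteq> carrier G \<and> coarsely_categorical (carrier G) (word_dist G S) (U i)" if i: "i \<le> n" for i
  proof -
    interpret cvi G S C n i by (rule ci[OF i])
    show ?thesis unfolding U_def using Ucol_M color_categorical by blast
  qed
  have 2: "carrier G \<subseteq> (\<Union>i\<le>n. U i)"
  proof
    fix x assume x: "x \<in> carrier G"
    obtain i V where iV: "i \<le> n" "V \<in> cov (real (rr (ann x))) i" "x \<in> V" using cov_cover[OF x] by blast
    interpret cvi G S C n i by (rule ci[OF iV(1)])
    have "x \<in> Ucol" unfolding Ucol_def using x iV by blast
    then show "x \<in> (\<Union>i\<le>n. U i)" using iV(1) unfolding U_def by blast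
  qed
  show ?thesis unfolding ccat_le_def using 1 2 by blast
qed

end

theorem corollary5p12:
  fixes G :: "('g, 'b) monoid_scheme" and S :: "'g set"
  assumes "group G" and "finite S" and "S \<subseteq> carrier G" and "generate G S = carrier G"
    and "bicombable G S" and "one_ended G S" and "semistable_at_infinity G S"
  shows "ccat (carrier G) (word_dist G S) \<le> asdim (carrier G) (word_dist G S)"
proof -
  obtain C where bic: "bicombing (carrier G) (word_dist G S) C" using assms(5) unfolding bicombable_def by blast
  have wg: "wgroup G S" using assms(1-4) by (simp add: wgroup_def wgroup_axioms_def)
  have we: "wge G S" using wg assms(6) by (simp add: wge_def wge_axioms_def)
  have wb: "wgb G S C" using we bic by (simp add: wgb_def wgb_axioms_def)
  have key: "ccat_le (carrier G) (word_dist G S) n" if "asdim_le (carrier G) (word_dist G S) n" for n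
  proof -
    have "cvr G S C n" using wb that by (simp add: cvr_def cvr_axioms_def)
    then show ?thesis by (rule cvr.ccat_n)
  qed
  show ?thesis
    unfolding ccat_def asdim_def
  proof (rule INF_greatest)
    fix n assume "n \<in> {n. asdim_le (carrier G) (word_dist G S) n}"
    then have "n \<in> {k. ccat_le (carrier G) (word_dist G S) k}" using key by simp
    then show "(INF k\<in>{k. ccat_le (carrier G) (word_dist G S) k}. enat k) \<le> enat n" by (rule INF_lower)
  qed
qed


end
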